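(* (i) Let $\theta\in[0,2\pi]$. If $\lambda_\infty>\|V\|_\infty$, then for no $s\in(0,L]$ is $\lambda_\infty$ an eigenvalue of $H_{\theta,s}$; in particular $\Gamma_2$ has no crossings with $\operatorname{Train}(X\times X)$ and $B_2=0$ (for any $s_0\in(0,L)$). (ii) Let $\theta\in(0,2\pi)$. If $\lambda_\infty>\|V\|_\infty$ and $0<s_0<\frac12\min\{\theta,2\pi-\theta\}\,(\|V\|_\infty+\lambda_\infty)^{-1/2}$, then no $\lambda\in[0,\lambda_\infty]$ is an eigenvalue of $H_{\theta,s_0}$; in particular $\Gamma_1$ has no crossings and $B_1=0$.
   Context: $n\ge1$, $L>0$; $V:\mathbb{R}\to\mathbb{R}^{n\times n}$ symmetric, with real piecewise continuous $2L$-periodic entries; $\|V\|_\infty=\sup_{x\in[-L,L]}\|V(x)\|$. For $\theta\in[0,2\pi]$, $s\in(0,L]$, $H_{\theta,s}$ is $y\mapsto y''+V(x)y$ in $L^2([-s,s];\mathbb{C}^n)$ with domain $\{y: y,y'\in AC,\ y''\in L^2,\ y(s)=e^{i\theta}y(-s),\ y'(s)=e^{i\theta}y'(-s)\}$. Notation: $\otimes$ Kronecker product, $\oplus$ block-diagonal sum, $J=\begin{pmatrix}0&1\\-1&0\end{pmatrix}$. $A(x,\lambda)=\begin{pmatrix}0_{2n}&I_{2n}\\ \lambda I_{2n}-V(x)\otimes I_2&0_{2n}\end{pmatrix}$, $\mathfrak{u}(s,\theta)=\begin{pmatrix}0&-\theta/(2s)\\ \theta/(2s)&0\end{pmatrix}$,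 $B(s,\theta)=I_{2n}\otimes\mathfrak{u}(s,\theta)$. $Y_{s,\lambda}$: absolutely continuous solutions on $[-L,L]$ of $\mathbf{p}'=A(x,\lambda)\mathbf{p}$, $\mathbf{w}'=B(s,\theta)\mathbf{w}$ ($\mathbf{p},\mathbf{w}\in\mathbb{R}^{4n}$), no boundary conditions. $\Phi_s^\lambda(\mathbf{p},\mathbf{w})=(\mathbf{p}(-s),\mathbf{w}(-s),\mathbf{p}(s),\mathbf{w}(s))^\top$. $\omega(v_1,v_2)=\langle v_1,\Omega v_2\rangle$, $\Omega=(J\otimes I_{2n})\oplus(J^\top\otimes I_{2n})\oplus(J^\top\otimes I_{2n})\oplus(J\otimes I_{2n})$. $X=\{(p,q,w,z)\in\mathbb{R}^{8n}: p=w, q=z\}$. A crossing of a path $t\mapsto\Phi(t)$ of Lagrangian planes is a parameter value $t_0$ with $\Phi(t_0)\cap(X\times X)\neq\{0\}$; the crossing form $Q$ on $\Phi(t_0)\cap(X\times X)$ is $Q(v,v)=\frac{d}{dt}\omega(v,\phi(t)v)|_{t_0}$ where $\Phi(t)$ is the graph of $\phi(t):\Phi(t_0)\to W$, $W$ a fixed complement. Curves for $s_0\in(0,L)$, $\lambda_\infty>0$: $\Gamma_1:\lambda\mapsto\Phi_{s_0}^\lambda(Y_{s_0,\lambda})$, $\lambda\in[0,\lambda_\infty]$; $\Gamma_2:s\mapsto\Phi_s^{\lambda_\infty}(Y_{s,\lambda_\infty})$, $s\in[s_0,L]$. For a path $\Gamma_i$ on $[a_i,b_i]$, $B_i=|\tfrac12\operatorname{sign}Q(a_i)|+\sum_{a_i<t<b_i}|\operatorname{sign}Q(t)|+|\tfrac12\operatorname{sign}Q(b_i)|$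 (number of crossings counted with multiplicity, regardless of sign). *)

theory Defs
  imports "HOL-Analysis.Analysis"
begin

definition absolutely_continuous_on ::
  "(real \<Rightarrow> 'a::real_normed_vector) \<Rightarrow> real set \<Rightarrow> bool" where
  "absolutely_continuous_on f S \<longleftrightarrow>
     (\<forall>\<epsilon>>0. \<exists>\<delta>>0. \<forall>I::(real \<times> real) set.
        finite I \<and> (\<forall>(a,b)\<in>I. a \<le> b \<and> {a..b} \<subseteq> S) \<and>
        pairwise (\<lambda>(a,b) (c,d). {a<..<b} \<inter> {c<..<d} = {}) I \<and>
        (\<Sum>(a,b)\<in>I. b - a) < \<delta>
        \<longrightarrow> (\<Sum>(a,b)\<in>I. norm (f b - f a)) < \<epsilon>)"

definition piecewise_continuous :: "(real \<Rightarrow> real) \<Rightarrow> bool" where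
  "piecewise_continuous f \<longleftrightarrow>
     (\<forall>a b. \<exists>S. finite S \<and> (\<forall>x\<in>{a..b} - S. isCont f x) \<and>
        (\<forall>x\<in>S. (\<exists>l. (f \<longlongrightarrow> l) (at_left x)) \<and> (\<exists>r. (f \<longlongrightarrow> r) (at_right x))))"

definition Vnorm_inf :: "(real \<Rightarrow> real^'n^'n::finite) \<Rightarrow> real \<Rightarrow> real" where
  "Vnorm_inf V L = Sup ((\<lambda>x. onorm (\<lambda>v. V x *v v)) ` {-L..L})"

definition complexify :: "real^'n^'n \<Rightarrow> complex^'n^'n" where
  "complexify M = (\<chi> i j. complex_of_real (M $ i $ j))"

text \<open>\<open>\<mu>\<close> is an eigenvalue of \<open>H_{\<theta>,s} y = y'' + V y\<close> on \<open>L\<^sup>2([-s,s];\<complex>\<^sup>n)\<close> with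
  \<open>\<theta>\<close>-periodic boundary conditions: there is a nonzero \<open>y\<close> in the domain
  (\<open>y, y'\<close> absolutely continuous, \<open>y'' \<in> L\<^sup>2\<close>, boundary conditions) with \<open>H y = \<mu> y\<close> a.e.\<close>
definition is_eigenvalue_H ::
  "(real \<Rightarrow> real^'n^'n::finite) \<Rightarrow> real \<Rightarrow> real \<Rightarrow> complex \<Rightarrow> bool" where
  "is_eigenvalue_H V \<theta> s \<mu> \<longleftrightarrow>
     (\<exists>(y::real \<Rightarrow> complex^'n::finite) y1 y2.
        absolutely_continuous_on y {-s..s} \<and>
        absolutely_continuous_on y1 {-s..s} \<and>
        (AE x in lebesgue. x \<in> {-s..s} \<longrightarrow> (y has_vector_derivative y1 x) (at x)) \<and>
        (AE x in lebesgue. x \<in> {-s..s} \<longrightarrow> (y1 has_vector_derivative y2 x) (at x)) \<and>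
        y2 \<in> borel_measurable (lebesgue_on {-s..s}) \<and>
        integrable (lebesgue_on {-s..s}) (\<lambda>x. (norm (y2 x))\<^sup>2) \<and>
        y s = exp (\<i> * complex_of_real \<theta>) *s y (-s) \<and>
        y1 s = exp (\<i> * complex_of_real \<theta>) *s y1 (-s) \<and>
        (AE x in lebesgue. x \<in> {-s..s} \<longrightarrow> y2 x + complexify (V x) *v y x = \<mu> *s y x) \<and>
        (\<exists>x\<in>{-s..s}. y x \<noteq> 0))"

text \<open>Coordinates of \<open>\<real>\<^sup>4\<^sup>n\<close> are indexed by \<open>((r,i),a) :: (bool \<times> 'n) \<times> bool\<close>,
  which in lexicographic order (False < True) is the flat index \<open>(r n + i) 2 + a\<close>;
  \<open>r\<close> selects the block (position/derivative) of \<open>\<bold>p\<close>, \<open>(i,a)\<close> is the Kronecker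
  index of \<open>V \<otimes> I\<^sub>2\<close>; for \<open>\<bold>w\<close>, \<open>(r,i)\<close> is the index of \<open>I\<^sub>2\<^sub>n\<close> and \<open>a\<close> that of \<open>\<u>\<close>.\<close>

definition kronI2 :: "real^'n^'n \<Rightarrow> real^('n \<times> bool)^('n \<times> bool)" where
  "kronI2 M = (\<chi> ia jb. if snd ia = snd jb then M $ fst ia $ fst jb else 0)"

definition Amat :: "(real \<Rightarrow> real^'n^'n::finite) \<Rightarrow> real \<Rightarrow> real \<Rightarrow>
    real^((bool \<times> 'n::finite) \<times> bool)^((bool \<times> 'n) \<times> bool)" where
  "Amat V x lam = (\<chi> ria cjb.
     let r = fst (fst ria); i = snd (fst ria); a = snd ria;
         c = fst (fst cjb); j = snd (fst cjb); b = snd cjb in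
     if \<not> r \<and> \<not> c then 0
     else if \<not> r \<and> c then (if (i,a) = (j,b) then 1 else 0)
     else if r \<and> \<not> c then (if (i,a) = (j,b) then lam else 0) - kronI2 (V x) $ (i,a) $ (j,b)
     else 0)"

definition umat :: "real \<Rightarrow> real \<Rightarrow> real^bool^bool" where
  "umat s \<theta> = (\<chi> a b. if \<not> a \<and> b then - \<theta> / (2 * s)
                      else if a \<and> \<not> b then \<theta> / (2 * s) else 0)"

definition Bmat :: "real \<Rightarrow> real \<Rightarrow> real^((bool \<times> 'n::finite) \<times> bool)^((bool \<times> 'n) \<times> bool)" where
  "Bmat s \<theta> = (\<chi> ka lb. if fst ka = fst lb then umat s \<theta> $ snd ka $ snd lb else 0)"

definition Ysol :: "(real \<Rightarrow> real^'n^'n::finite) \<Rightarrow> real \<Rightarrow> real \<Rightarrow> real \<Rightarrow> real \<Rightarrow>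
    ((real \<Rightarrow> real^((bool \<times> 'n::finite) \<times> bool)) \<times> (real \<Rightarrow> real^((bool \<times> 'n) \<times> bool))) set" where
  "Ysol V L \<theta> s lam = {(p, w).
     absolutely_continuous_on p {-L..L} \<and> absolutely_continuous_on w {-L..L} \<and>
     (AE x in lebesgue. x \<in> {-L..L} \<longrightarrow> (p has_vector_derivative (Amat V x lam *v p x)) (at x)) \<and>
     (AE x in lebesgue. x \<in> {-L..L} \<longrightarrow> (w has_vector_derivative (Bmat s \<theta> *v w x)) (at x))}"

definition Phi :: "real \<Rightarrow> (real \<Rightarrow> 'k) \<times> (real \<Rightarrow> 'k) \<Rightarrow> ('k \<times> 'k) \<times> ('k \<times> 'k)" where
  "Phi s pw = ((fst pw (-s), snd pw (-s)), (fst pw s, snd pw s))"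

text \<open>\<open>X = {(p,q,w,z). p = w, q = z}\<close>, a point of \<open>\<real>\<^sup>8\<^sup>n\<close> being the pair \<open>((p,q),(w,z))\<close>.\<close>
definition Xset :: "('k \<times> 'k) set" where
  "Xset = {(u, v). u = v}"

definition is_crossing :: "(real \<Rightarrow> real^'n^'n::finite) \<Rightarrow> real \<Rightarrow> real \<Rightarrow> real \<Rightarrow> real \<Rightarrow> bool" where
  "is_crossing V L \<theta> s lam \<longleftrightarrow> (Phi s ` Ysol V L \<theta> s lam) \<inter> (Xset \<times> Xset) \<noteq> {0}"

end

theory Submission
  imports Defs
begin

lemma acD:
  assumes "absolutely_continuous_on f S" "e > 0"
  obtains d where "d > 0" "\<And>I::(real\<times>real) set. finite I \<Longrightarrow> (\<forall>(a,b)\<in>I. a \<le> b \<and> {a..b} \<subseteq> S) \<Longrightarrow>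
        pairwise (\<lambda>(a,b) (c,d). {a<..<b} \<inter> {c<..<d} = {}) I \<Longrightarrow> (\<Sum>(a,b)\<in>I. b - a) < d
        \<Longrightarrow> (\<Sum>(a,b)\<in>I. norm (f b - f a)) < e"
proof -
  have "\<exists>d>0. \<forall>I::(real\<times>real) set. finite I \<and> (\<forall>(a,b)\<in>I. a \<le> b \<and> {a..b} \<subseteq> S) \<and>
        pairwise (\<lambda>(a,b) (c,d). {a<..<b} \<inter> {c<..<d} = {}) I \<and> (\<Sum>(a,b)\<in>I. b - a) < d
        \<longrightarrow> (\<Sum>(a,b)\<in>I. norm (f b - f a)) < e"
    using mp[OF spec[OF assms(1)[unfolded absolutely_continuous_on_def], of e] assms(2)] .
  then obtain d where "d > 0" "\<forall>I::(real\<times>real) set. finite I \<and> (\<forall>(a,b)\<in>I. a \<le> b \<and> {a..b} \<subseteq> S) \<and>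
        pairwise (\<lambda>(a,b) (c,d). {a<..<b} \<inter> {c<..<d} = {}) I \<and> (\<Sum>(a,b)\<in>I. b - a) < d
        \<longrightarrow> (\<Sum>(a,b)\<in>I. norm (f b - f a)) < e" by (elim exE conjE)
  then show ?thesis using that by simp
qed

lemma acI:
  assumes "\<And>e. e > 0 \<Longrightarrow> \<exists>d>0. \<forall>I::(real\<times>real) set. finite I \<longrightarrow> (\<forall>(a,b)\<in>I. a \<le> b \<and> {a..b} \<subseteq> S) \<longrightarrow>
        pairwise (\<lambda>(a,b) (c,d). {a<..<b} \<inter> {c<..<d} = {}) I \<longrightarrow> (\<Sum>(a,b)\<in>I. b - a) < d
        \<longrightarrow> (\<Sum>(a,b)\<in>I. norm (f b - f a)) < e"
  shows "absolutely_continuous_on f S"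
  unfolding absolutely_continuous_on_def
proof (intro allI impI)
  fix e :: real assume "e > 0"
  from assms[OF this] obtain d where "d > 0" "\<forall>I::(real\<times>real) set. finite I \<longrightarrow> (\<forall>(a,b)\<in>I. a \<le> b \<and> {a..b} \<subseteq> S) \<longrightarrow>
        pairwise (\<lambda>(a,b) (c,d). {a<..<b} \<inter> {c<..<d} = {}) I \<longrightarrow> (\<Sum>(a,b)\<in>I. b - a) < d
        \<longrightarrow> (\<Sum>(a,b)\<in>I. norm (f b - f a)) < e" by (elim exE conjE)
  then show "\<exists>d>0. \<forall>I::(real\<times>real) set. finite I \<and> (\<forall>(a,b)\<in>I. a \<le> b \<and> {a..b} \<subseteq> S) \<and>
        pairwise (\<lambda>(a,b) (c,d). {a<..<b} \<inter> {c<..<d} = {}) I \<and> (\<Sum>(a,b)\<in>I. b - a) < d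
        \<longrightarrow> (\<Sum>(a,b)\<in>I. norm (f b - f a)) < e" by (intro exI[of _ d]) simp
qed

lemma ac_subset':
  assumes "absolutely_continuous_on f S" "T \<subseteq> S"
  shows "absolutely_continuous_on f T"
proof (rule acI)
  fix e :: real assume "e > 0"
  then obtain d where d: "d > 0" and H: "\<And>I::(real\<times>real) set. finite I \<Longrightarrow> (\<forall>(a,b)\<in>I. a \<le> b \<and> {a..b} \<subseteq> S) \<Longrightarrow>
        pairwise (\<lambda>(a,b) (c,d). {a<..<b} \<inter> {c<..<d} = {}) I \<Longrightarrow> (\<Sum>(a,b)\<in>I. b - a) < d
        \<Longrightarrow> (\<Sum>(a,b)\<in>I. norm (f b - f a)) < e"
    using acD[OF assms(1)] by blast
  show "\<exists>d>0. \<forall>I::(real\<times>real) set. finite I \<longrightarrow> (\<forall>(a,b)\<in>I. a \<le> b \<and> {a..b} \<subseteq> T) \<longrightarrow>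
        pairwise (\<lambda>(a,b) (c,d). {a<..<b} \<inter> {c<..<d} = {}) I \<longrightarrow> (\<Sum>(a,b)\<in>I. b - a) < d
        \<longrightarrow> (\<Sum>(a,b)\<in>I. norm (f b - f a)) < e"
  proof (intro exI[of _ d] conjI allI impI)
    fix I :: "(real\<times>real) set"
    assume A: "finite I" "\<forall>(a,b)\<in>I. a \<le> b \<and> {a..b} \<subseteq> T"
      "pairwise (\<lambda>(a,b) (c,d). {a<..<b} \<inter> {c<..<d} = {}) I" "(\<Sum>(a,b)\<in>I. b - a) < d"
    have "\<forall>(a,b)\<in>I. a \<le> b \<and> {a..b} \<subseteq> S" using A(2) assms(2) by blast
    then show "(\<Sum>(a,b)\<in>I. norm (f b - f a)) < e" using A by (intro H) simp_all
  qed (rule d)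
qed

lemma ac_continuous_on:
  fixes f :: "real \<Rightarrow> 'a::real_normed_vector"
  assumes ac: "absolutely_continuous_on f {a..b}"
  shows "continuous_on {a..b} f"
  unfolding continuous_on_iff
proof (intro ballI allI impI)
  fix x e assume x: "x \<in> {a..b}" and e: "(e::real) > 0"
  then obtain d where d: "d > 0" and H: "\<And>I::(real\<times>real) set. finite I \<Longrightarrow> (\<forall>(a',b')\<in>I. a' \<le> b' \<and> {a'..b'} \<subseteq> {a..b}) \<Longrightarrow>
        pairwise (\<lambda>(a,b) (c,d). {a<..<b} \<inter> {c<..<d} = {}) I \<Longrightarrow> (\<Sum>(a,b)\<in>I. b - a) < d
        \<Longrightarrow> (\<Sum>(a,b)\<in>I. norm (f b - f a)) < e"
    using acD[OF ac] by blast
  show "\<exists>d>0. \<forall>x'\<in>{a..b}. dist x' x < d \<longrightarrow> dist (f x') (f x) < e"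
  proof (intro exI[of _ d] conjI ballI impI)
    fix y assume y: "y \<in> {a..b}" "dist y x < d"
    have "(\<Sum>(u,v)\<in>{(min x y, max x y)}. norm (f v - f u)) < e"
      by (rule H) (use x y in \<open>auto simp: dist_real_def\<close>)
    then show "dist (f y) (f x) < e"
      by (cases "x \<le> y") (auto simp: dist_norm norm_minus_commute min_def max_def)
  qed (use d in auto)
qed

lemma ac_linear:
  assumes T: "bounded_linear T" and ac: "absolutely_continuous_on f S"
  shows "absolutely_continuous_on (\<lambda>x. T (f x)) S"
proof (rule acI)
  fix e :: real assume e: "e > 0"
  obtain K where K: "K > 0" "\<And>x. norm (T x) \<le> norm x * K"
    using bounded_linear.pos_bounded[OF T] by blast
  have eK: "e / K > 0" using e K by simp
  obtain d where d: "d > 0" and H: "\<And>I::(real\<times>real) set. finite I \<Longrightarrow> (\<forall>(a,b)\<in>I. a \<le> b \<and> {a..b} \<subseteq> S) \<Longrightarrow>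
        pairwise (\<lambda>(a,b) (c,d). {a<..<b} \<inter> {c<..<d} = {}) I \<Longrightarrow> (\<Sum>(a,b)\<in>I. b - a) < d
        \<Longrightarrow> (\<Sum>(a,b)\<in>I. norm (f b - f a)) < e / K"
    using acD[OF ac eK] by blast
  show "\<exists>d>0. \<forall>I::(real\<times>real) set. finite I \<longrightarrow> (\<forall>(a,b)\<in>I. a \<le> b \<and> {a..b} \<subseteq> S) \<longrightarrow>
        pairwise (\<lambda>(a,b) (c,d). {a<..<b} \<inter> {c<..<d} = {}) I \<longrightarrow> (\<Sum>(a,b)\<in>I. b - a) < d
        \<longrightarrow> (\<Sum>(a,b)\<in>I. norm (T (f b) - T (f a))) < e"
  proof (intro exI[of _ d] conjI allI impI)
    fix I :: "(real\<times>real) set"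
    assume A: "finite I" "\<forall>(a,b)\<in>I. a \<le> b \<and> {a..b} \<subseteq> S"
      "pairwise (\<lambda>(a,b) (c,d). {a<..<b} \<inter> {c<..<d} = {}) I" "(\<Sum>(a,b)\<in>I. b - a) < d"
    have "(\<Sum>(a,b)\<in>I. norm (T (f b) - T (f a))) \<le> (\<Sum>(a,b)\<in>I. norm (f b - f a) * K)"
    proof (rule sum_mono)
      fix p assume "p \<in> I"
      obtain a b where p: "p = (a,b)" by (cases p)
      have "norm (T (f b) - T (f a)) = norm (T (f b - f a))"
        by (simp add: linear_diff[OF bounded_linear.linear[OF T]])
      also have "\<dots> \<le> norm (f b - f a) * K" by (rule K(2))
      finally show "(case p of (a, b) \<Rightarrow> norm (T (f b) - T (f a))) \<le> (case p of (a, b) \<Rightarrow> norm (f b - f a) * K)"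
        using p by simp
    qed
    also have "\<dots> = (\<Sum>(a,b)\<in>I. norm (f b - f a)) * K"
      by (simp add: sum_distrib_right case_prod_beta)
    also have "\<dots> < e / K * K"
      using H[OF A] K by (intro mult_strict_right_mono) auto
    finally show "(\<Sum>(a,b)\<in>I. norm (T (f b) - T (f a))) < e" using K by simp
  qed (use d in auto)
qed

lemma ac_add:
  assumes f: "absolutely_continuous_on f S" and g: "absolutely_continuous_on g S"
  shows "absolutely_continuous_on (\<lambda>x. f x + g x) S"
proof (rule acI)
  fix e :: real assume e: "e > 0"
  have e2: "e/2 > 0" using e by simp
  obtain d1 where d1: "d1 > 0" and H1: "\<And>I::(real\<times>real) set. finite I \<Longrightarrow> (\<forall>(a,b)\<in>I. a \<le> b \<and> {a..b} \<subseteq> S) \<Longrightarrow>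
        pairwise (\<lambda>(a,b) (c,d). {a<..<b} \<inter> {c<..<d} = {}) I \<Longrightarrow> (\<Sum>(a,b)\<in>I. b - a) < d1
        \<Longrightarrow> (\<Sum>(a,b)\<in>I. norm (f b - f a)) < e / 2"
    using acD[OF f e2] by blast
  obtain d2 where d2: "d2 > 0" and H2: "\<And>I::(real\<times>real) set. finite I \<Longrightarrow> (\<forall>(a,b)\<in>I. a \<le> b \<and> {a..b} \<subseteq> S) \<Longrightarrow>
        pairwise (\<lambda>(a,b) (c,d). {a<..<b} \<inter> {c<..<d} = {}) I \<Longrightarrow> (\<Sum>(a,b)\<in>I. b - a) < d2
        \<Longrightarrow> (\<Sum>(a,b)\<in>I. norm (g b - g a)) < e / 2"
    using acD[OF g e2] by blast
  show "\<exists>d>0. \<forall>I::(real\<times>real) set. finite I \<longrightarrow> (\<forall>(a,b)\<in>I. a \<le> b \<and> {a..b} \<subseteq> S) \<longrightarrow>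
        pairwise (\<lambda>(a,b) (c,d). {a<..<b} \<inter> {c<..<d} = {}) I \<longrightarrow> (\<Sum>(a,b)\<in>I. b - a) < d
        \<longrightarrow> (\<Sum>(a,b)\<in>I. norm ((f b + g b) - (f a + g a))) < e"
  proof (intro exI[of _ "min d1 d2"] conjI allI impI)
    fix I :: "(real\<times>real) set"
    assume A: "finite I" "\<forall>(a,b)\<in>I. a \<le> b \<and> {a..b} \<subseteq> S"
      "pairwise (\<lambda>(a,b) (c,d). {a<..<b} \<inter> {c<..<d} = {}) I" "(\<Sum>(a,b)\<in>I. b - a) < min d1 d2"
    have "(\<Sum>(a,b)\<in>I. norm ((f b + g b) - (f a + g a))) \<le> (\<Sum>(a,b)\<in>I. norm (f b - f a) + norm (g b - g a))"
    proof (rule sum_mono)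
      fix p assume "p \<in> I"
      obtain a b where p: "p = (a,b)" by (cases p)
      have "(f b + g b) - (f a + g a) = (f b - f a) + (g b - g a)" by (simp add: algebra_simps)
      then have "norm ((f b + g b) - (f a + g a)) \<le> norm (f b - f a) + norm (g b - g a)"
        by (metis norm_triangle_ineq)
      then show "(case p of (a, b) \<Rightarrow> norm ((f b + g b) - (f a + g a))) \<le> (case p of (a, b) \<Rightarrow> norm (f b - f a) + norm (g b - g a))"
        using p by simp
    qed
    also have "\<dots> = (\<Sum>(a,b)\<in>I. norm (f b - f a)) + (\<Sum>(a,b)\<in>I. norm (g b - g a))"
      by (simp add: sum.distrib case_prod_beta)
    also have "\<dots> < e/2 + e/2"
      using H1[OF A(1-3)] H2[OF A(1-3)] A(4) by (intro add_strict_mono) auto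
    finally show "(\<Sum>(a,b)\<in>I. norm ((f b + g b) - (f a + g a))) < e" by simp
  qed (use d1 d2 in auto)
qed

lemma ac_lipschitz:
  fixes f :: "real \<Rightarrow> 'a::real_normed_vector"
  assumes L: "\<And>x y. x \<in> S \<Longrightarrow> y \<in> S \<Longrightarrow> norm (f x - f y) \<le> B * \<bar>x - y\<bar>"
  shows "absolutely_continuous_on f S"
proof (unfold absolutely_continuous_on_def, intro allI impI)
  fix e :: real assume e: "e > 0"
  define B' where "B' = \<bar>B\<bar> + 1"
  have B': "B' > 0" "B \<le> B'" by (auto simp: B'_def)
  show "\<exists>d>0. \<forall>I::(real\<times>real) set. finite I \<and> (\<forall>(a,b)\<in>I. a \<le> b \<and> {a..b} \<subseteq> S) \<and>
        pairwise (\<lambda>(a,b) (c,d). {a<..<b} \<inter> {c<..<d} = {}) I \<and> (\<Sum>(a,b)\<in>I. b - a) < d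
        \<longrightarrow> (\<Sum>(a,b)\<in>I. norm (f b - f a)) < e"
  proof (intro exI[of _ "e / B'"] conjI allI impI)
    fix I :: "(real\<times>real) set"
    assume A: "finite I \<and> (\<forall>(a,b)\<in>I. a \<le> b \<and> {a..b} \<subseteq> S) \<and>
        pairwise (\<lambda>(a,b) (c,d). {a<..<b} \<inter> {c<..<d} = {}) I \<and> (\<Sum>(a,b)\<in>I. b - a) < e / B'"
    have "(\<Sum>(a,b)\<in>I. norm (f b - f a)) \<le> (\<Sum>(a,b)\<in>I. B' * (b - a))"
    proof (rule sum_mono)
      fix p assume pI: "p \<in> I"
      obtain a b where p: "p = (a,b)" by (cases p)
      have all: "\<forall>(a,b)\<in>I. a \<le> b \<and> {a..b} \<subseteq> S" using A by blast
      have ab: "a \<le> b" "{a..b} \<subseteq> S" using all pI unfolding p by auto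
      have abS: "a \<in> S" "b \<in> S" using ab by auto
      have "norm (f b - f a) \<le> B * \<bar>b - a\<bar>" using L[OF abS(2) abS(1)] .
      also have "\<dots> = B * (b - a)" using ab by simp
      also have "\<dots> \<le> B' * (b - a)" using ab B' by (intro mult_right_mono) auto
      finally show "(case p of (a, b) \<Rightarrow> norm (f b - f a)) \<le> (case p of (a, b) \<Rightarrow> B' * (b - a))"
        using p by simp
    qed
    also have "\<dots> = B' * (\<Sum>(a,b)\<in>I. b - a)"
      by (simp add: sum_distrib_left case_prod_beta)
    also have "\<dots> < B' * (e / B')"
      using A B' by (intro mult_strict_left_mono) auto
    finally show "(\<Sum>(a,b)\<in>I. norm (f b - f a)) < e" using B' by simp
  qed (use e B' in auto)
qed

lemma ac_bilinear:
  fixes f :: "real \<Rightarrow> 'a::real_normed_vector" and g :: "real \<Rightarrow> 'b::real_normed_vector"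
  assumes bb: "bounded_bilinear bp" and f: "absolutely_continuous_on f {a..b}"
    and g: "absolutely_continuous_on g {a..b}"
  shows "absolutely_continuous_on (\<lambda>x. bp (f x) (g x)) {a..b}"
proof (rule acI)
  fix e :: real assume e: "e > 0"
  obtain K where K: "K > 0" "\<And>x y. norm (bp x y) \<le> norm x * norm y * K"
    using bounded_bilinear.pos_bounded[OF bb] by blast
  have "bounded (f ` {a..b})"
    by (intro compact_imp_bounded compact_continuous_image ac_continuous_on f) simp
  then obtain F where F: "F > 0" "\<And>x. x \<in> {a..b} \<Longrightarrow> norm (f x) \<le> F"
    unfolding bounded_pos by auto
  have "bounded (g ` {a..b})"
    by (intro compact_imp_bounded compact_continuous_image ac_continuous_on g) simp
  then obtain G where G: "G > 0" "\<And>x. x \<in> {a..b} \<Longrightarrow> norm (g x) \<le> G"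
    unfolding bounded_pos by auto
  have e1: "e / (2*K*G) > 0" and e2: "e / (2*K*F) > 0" using e K F G by auto
  obtain d1 where d1: "d1 > 0" and H1: "\<And>I::(real\<times>real) set. finite I \<Longrightarrow> (\<forall>(u,v)\<in>I. u \<le> v \<and> {u..v} \<subseteq> {a..b}) \<Longrightarrow>
        pairwise (\<lambda>(a,b) (c,d). {a<..<b} \<inter> {c<..<d} = {}) I \<Longrightarrow> (\<Sum>(u,v)\<in>I. v - u) < d1
        \<Longrightarrow> (\<Sum>(u,v)\<in>I. norm (f v - f u)) < e / (2*K*G)"
    using acD[OF f e1] by blast
  obtain d2 where d2: "d2 > 0" and H2: "\<And>I::(real\<times>real) set. finite I \<Longrightarrow> (\<forall>(u,v)\<in>I. u \<le> v \<and> {u..v} \<subseteq> {a..b}) \<Longrightarrow>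
        pairwise (\<lambda>(a,b) (c,d). {a<..<b} \<inter> {c<..<d} = {}) I \<Longrightarrow> (\<Sum>(u,v)\<in>I. v - u) < d2
        \<Longrightarrow> (\<Sum>(u,v)\<in>I. norm (g v - g u)) < e / (2*K*F)"
    using acD[OF g e2] by blast
  show "\<exists>d>0. \<forall>I::(real\<times>real) set. finite I \<longrightarrow> (\<forall>(u,v)\<in>I. u \<le> v \<and> {u..v} \<subseteq> {a..b}) \<longrightarrow>
        pairwise (\<lambda>(a,b) (c,d). {a<..<b} \<inter> {c<..<d} = {}) I \<longrightarrow> (\<Sum>(u,v)\<in>I. v - u) < d
        \<longrightarrow> (\<Sum>(u,v)\<in>I. norm (bp (f v) (g v) - bp (f u) (g u))) < e"
  proof (intro exI[of _ "min d1 d2"] conjI allI impI)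
    fix I :: "(real\<times>real) set"
    assume A: "finite I" "\<forall>(u,v)\<in>I. u \<le> v \<and> {u..v} \<subseteq> {a..b}"
      "pairwise (\<lambda>(a,b) (c,d). {a<..<b} \<inter> {c<..<d} = {}) I" "(\<Sum>(u,v)\<in>I. v - u) < min d1 d2"
    have "(\<Sum>(u,v)\<in>I. norm (bp (f v) (g v) - bp (f u) (g u)))
        \<le> (\<Sum>(u,v)\<in>I. (K*G) * norm (f v - f u) + (K*F) * norm (g v - g u))"
    proof (rule sum_mono)
      fix p assume pI: "p \<in> I"
      obtain u v where p: "p = (u,v)" by (cases p)
      have uv: "u \<le> v" "{u..v} \<subseteq> {a..b}" using A(2) pI unfolding p by auto
      have uv': "u \<in> {a..b}" "v \<in> {a..b}" using uv by auto
      have eq: "bp (f v) (g v) - bp (f u) (g u) = bp (f v - f u) (g v) + bp (f u) (g v - g u)"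
        by (simp add: bounded_bilinear.diff_left[OF bb] bounded_bilinear.diff_right[OF bb])
      have n1: "norm (bp (f v - f u) (g v)) \<le> (K*G) * norm (f v - f u)"
      proof -
        have "norm (bp (f v - f u) (g v)) \<le> norm (f v - f u) * norm (g v) * K" by (rule K(2))
        also have "\<dots> \<le> norm (f v - f u) * G * K"
          using G(2)[OF uv'(2)] K by (intro mult_right_mono mult_left_mono) auto
        finally show ?thesis by (simp add: algebra_simps)
      qed
      have n2: "norm (bp (f u) (g v - g u)) \<le> (K*F) * norm (g v - g u)"
      proof -
        have "norm (bp (f u) (g v - g u)) \<le> norm (f u) * norm (g v - g u) * K" by (rule K(2))
        also have "\<dots> \<le> F * norm (g v - g u) * K"
          using F(2)[OF uv'(1)] K by (intro mult_right_mono) auto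
        finally show ?thesis by (simp add: algebra_simps)
      qed
      have "norm (bp (f v) (g v) - bp (f u) (g u)) \<le> (K*G) * norm (f v - f u) + (K*F) * norm (g v - g u)"
        unfolding eq by (rule order_trans[OF norm_triangle_ineq]) (rule add_mono[OF n1 n2])
      then show "(case p of (u, v) \<Rightarrow> norm (bp (f v) (g v) - bp (f u) (g u)))
          \<le> (case p of (u, v) \<Rightarrow> (K*G) * norm (f v - f u) + (K*F) * norm (g v - g u))"
        using p by simp
    qed
    also have "\<dots> = (K*G) * (\<Sum>(u,v)\<in>I. norm (f v - f u)) + (K*F) * (\<Sum>(u,v)\<in>I. norm (g v - g u))"
      by (simp add: sum.distrib sum_distrib_left case_prod_beta)
    also have "\<dots> < (K*G) * (e / (2*K*G)) + (K*F) * (e / (2*K*F))"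
      using H1[OF A(1-3)] H2[OF A(1-3)] A(4) K F G
      by (intro add_strict_mono mult_strict_left_mono) auto
    also have "\<dots> = e" using K F G by (simp add: field_simps)
    finally show "(\<Sum>(u,v)\<in>I. norm (bp (f v) (g v) - bp (f u) (g u))) < e" .
  qed (use d1 d2 in auto)
qed

lemma deriv_local_bound:
  fixes f :: "real \<Rightarrow> real"
  assumes "(f has_real_derivative d) (at x)" "e > 0"
  shows "\<exists>r>0. \<forall>y. \<bar>y - x\<bar> < r \<longrightarrow> \<bar>f y - f x - d * (y - x)\<bar> \<le> e * \<bar>y - x\<bar>"
proof -
  have "((\<lambda>y. (f y - f x) / (y - x)) \<longlongrightarrow> d) (at x)"
    using assms(1) has_field_derivative_iff by blast
  then have "eventually (\<lambda>y. dist ((f y - f x) / (y - x)) d < e) (at x)"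
    by (rule tendstoD[OF _ assms(2)])
  then obtain r where r: "r > 0" "\<And>y. y \<noteq> x \<Longrightarrow> dist y x < r \<Longrightarrow> dist ((f y - f x) / (y - x)) d < e"
    unfolding eventually_at by auto
  show ?thesis
  proof (intro exI[of _ r] conjI allI impI)
    fix y assume y: "\<bar>y - x\<bar> < r"
    show "\<bar>f y - f x - d * (y - x)\<bar> \<le> e * \<bar>y - x\<bar>"
    proof (cases "y = x")
      case False
      then have "\<bar>(f y - f x) / (y - x) - d\<bar> < e" using r(2)[of y] y by (simp add: dist_real_def)
      moreover have "f y - f x - d * (y - x) = (y - x) * ((f y - f x) / (y - x) - d)"
        using False by (simp add: field_simps)
      moreover have "\<bar>y - x\<bar> * \<bar>(f y - f x) / (y - x) - d\<bar> \<le> \<bar>y - x\<bar> * e"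
        using calculation(1) by (intro mult_left_mono) auto
      ultimately show ?thesis
        by (simp add: abs_mult mult.commute)
    qed simp
  qed (use r in auto)
qed

lemma ac_mono0:
  fixes f :: "real \<Rightarrow> real"
  assumes ac: "absolutely_continuous_on f {a..b}" and ab: "a \<le> b" and N: "negligible N"
    and der: "\<And>x. x \<in> {a..b} - N \<Longrightarrow> \<exists>d. (f has_real_derivative d) (at x) \<and> d \<ge> 0"
  shows "f a \<le> f b"
proof -
  have key: "f a - f b \<le> e * (b - a + 1)" if e: "e > 0" for e
  proof -
    obtain \<delta> where \<delta>: "\<delta> > 0" and H: "\<And>I::(real\<times>real) set. finite I \<Longrightarrow> (\<forall>(u,v)\<in>I. u \<le> v \<and> {u..v} \<subseteq> {a..b}) \<Longrightarrow>
        pairwise (\<lambda>(a,b) (c,d). {a<..<b} \<inter> {c<..<d} = {}) I \<Longrightarrow> (\<Sum>(u,v)\<in>I. v - u) < \<delta>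
        \<Longrightarrow> (\<Sum>(u,v)\<in>I. norm (f v - f u)) < e"
      using acD[OF ac e] by blast
    have Nnull: "N \<in> null_sets lebesgue" using N negligible_iff_null_sets by blast
    then have Nsets: "N \<in> sets lebesgue" by auto
    obtain T where T: "open T" "N \<subseteq> T" "T - N \<in> lmeasurable" "emeasure lebesgue (T - N) < ennreal \<delta>"
      using sets_lebesgue_outer_open[OF Nsets \<delta>] by blast
    have NT: "T = (T - N) \<union> N" using T(2) by auto
    have Nf: "N \<in> lmeasurable" using fmeasurableI_null_sets[OF Nnull] .
    have Tm: "T \<in> lmeasurable" using NT T(3) Nf by (metis fmeasurable.Un)
    have m0: "measure lebesgue N = 0" using Nnull by (simp add: measure_eq_0_null_sets)
    have "measure lebesgue (T - N) < \<delta>"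
      using T(3,4) \<delta> by (simp add: emeasure_eq_measure2 ennreal_less_iff)
    moreover have "measure lebesgue T \<le> measure lebesgue (T - N) + measure lebesgue N"
      using measure_Un_le[of "T - N" lebesgue N] T(3) Nsets NT by (metis fmeasurable_def mem_Collect_eq sets.Int_space_eq2 Int_iff subsetI fmeasurable.Un)
    ultimately have mT: "measure lebesgue T < \<delta>" using m0 by simp
    define P where "P x r \<longleftrightarrow> (x \<in> T \<longrightarrow> ball x r \<subseteq> T) \<and>
       (x \<notin> T \<and> x \<in> {a..b} \<longrightarrow> (\<exists>d\<ge>0. \<forall>y. \<bar>y - x\<bar> < r \<longrightarrow> \<bar>f y - f x - d * (y - x)\<bar> \<le> e * \<bar>y - x\<bar>))" for x r
    have ex: "\<exists>r>0. P x r" for x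
    proof (cases "x \<in> T")
      case True
      then obtain r where "r > 0" "ball x r \<subseteq> T" using T(1) open_contains_ball by blast
      then show ?thesis unfolding P_def using True by blast
    next
      case False
      show ?thesis
      proof (cases "x \<in> {a..b}")
        case True
        then have "x \<in> {a..b} - N" using False T(2) by auto
        then obtain d where d: "(f has_real_derivative d) (at x)" "d \<ge> 0" using der by blast
        obtain r where "r > 0" "\<forall>y. \<bar>y - x\<bar> < r \<longrightarrow> \<bar>f y - f x - d * (y - x)\<bar> \<le> e * \<bar>y - x\<bar>"
          using deriv_local_bound[OF d(1) e] by blast
        then show ?thesis unfolding P_def using False d(2) by blast
      next
        case False2: False
        show ?thesis unfolding P_def using False False2 by (intro exI[of _ 1]) auto
      qed
    qed
    define \<rho> where "\<rho> x = (SOME r. r > 0 \<and> P x r)" for x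
    have \<rho>: "\<rho> x > 0 \<and> P x (\<rho> x)" for x
      unfolding \<rho>_def using someI_ex[OF ex[of x]] .
    have gauge: "gauge (\<lambda>x. ball x (\<rho> x))"
      using \<rho> by (intro gauge_ball_dependent) auto
    obtain p where p: "p tagged_division_of {a..b}" and fine: "(\<lambda>x. ball x (\<rho> x)) fine p"
      using fine_division_exists_real[OF gauge] by blast
    have pfin: "finite p" using p by (rule tagged_division_ofD(1))
    have elem: "\<exists>u v. K = {u..v} \<and> u \<le> v \<and> x \<in> K \<and> K \<subseteq> {a..b} \<and> K \<subseteq> ball x (\<rho> x)
                  \<and> Inf K = u \<and> Sup K = v" if xKp: "(x,K) \<in> p" for x K
    proof -
      obtain u v where K: "K = cbox u v" using tagged_division_ofD(4)[OF p xKp] by blast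
      have xK: "x \<in> K" using tagged_division_ofD(2)[OF p xKp] .
      then have uv: "u \<le> v" using K by auto
      show ?thesis
        using K xK uv tagged_division_ofD(3)[OF p xKp] fine xKp
        by (intro exI[of _ u] exI[of _ v]) (auto simp: fine_def)
    qed
    define \<Delta> where "\<Delta> K = f (Sup K) - f (Inf K)" for K
    have total: "f b - f a = (\<Sum>(x,K)\<in>p. \<Delta> K)"
      using additive_tagged_division_1[OF ab p, of f] unfolding \<Delta>_def by simp
    have total_len: "b - a = (\<Sum>(x,K)\<in>p. Sup K - Inf K)"
      using additive_tagged_division_1[OF ab p, of "\<lambda>x. x"] by simp
    define p1 where "p1 = {(x,K)\<in>p. x \<in> T \<and> Inf K < Sup K}"
    define p2 where "p2 = {(x,K)\<in>p. x \<notin> T}"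
    define p3 where "p3 = {(x,K)\<in>p. x \<in> T \<and> \<not> Inf K < Sup K}"
    have psplit: "p = p1 \<union> p2 \<union> p3" unfolding p1_def p2_def p3_def by auto
    have subs: "p1 \<subseteq> p" "p2 \<subseteq> p" "p3 \<subseteq> p" unfolding p1_def p2_def p3_def by auto
    have fins: "finite p1" "finite p2" "finite p3"
      using finite_subset[OF _ pfin] subs by auto
    have disj: "p1 \<inter> p2 = {}" "(p1 \<union> p2) \<inter> p3 = {}" unfolding p1_def p2_def p3_def by auto
    have sum_split: "(\<Sum>(x,K)\<in>p. \<Delta> K) = (\<Sum>(x,K)\<in>p1. \<Delta> K) + (\<Sum>(x,K)\<in>p2. \<Delta> K) + (\<Sum>(x,K)\<in>p3. \<Delta> K)"
      unfolding psplit using fins disj by (simp add: sum.union_disjoint)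
    have s3: "(\<Sum>(x,K)\<in>p3. \<Delta> K) = 0"
    proof (rule sum.neutral, safe)
      fix x K assume "(x,K) \<in> p3"
      then have "(x,K) \<in> p" "\<not> Inf K < Sup K" unfolding p3_def by auto
      with elem[OF this(1)] have "Inf K = Sup K" by force
      then show "\<Delta> K = 0" unfolding \<Delta>_def by simp
    qed
    have s2: "(\<Sum>(x,K)\<in>p2. \<Delta> K) \<ge> - e * (b - a)"
    proof -
      have "(\<Sum>(x,K)\<in>p2. \<Delta> K) \<ge> (\<Sum>(x,K)\<in>p2. - e * (Sup K - Inf K))"
      proof (rule sum_mono, safe)
        fix x K assume xK: "(x,K) \<in> p2"
        then have xKp: "(x,K) \<in> p" and xT: "x \<notin> T" unfolding p2_def by auto
        obtain u v where K: "K = {u..v}" "u \<le> v" "x \<in> K" "K \<subseteq> {a..b}" "K \<subseteq> ball x (\<rho> x)" "Inf K = u" "Sup K = v"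
          using elem[OF xKp] by blast
        have xab: "x \<in> {a..b}" using K by auto
        obtain d where d: "d \<ge> 0" "\<And>y. \<bar>y - x\<bar> < \<rho> x \<Longrightarrow> \<bar>f y - f x - d * (y - x)\<bar> \<le> e * \<bar>y - x\<bar>"
          using \<rho>[of x] xT xab unfolding P_def by blast
        have ux: "u \<le> x" "x \<le> v" using K by auto
        have "u \<in> K" "v \<in> K" using K ux by auto
        then have "u \<in> ball x (\<rho> x)" "v \<in> ball x (\<rho> x)" using K(5) by auto
        then have uin: "\<bar>u - x\<bar> < \<rho> x" and vin: "\<bar>v - x\<bar> < \<rho> x"
          by (auto simp: dist_real_def abs_minus_commute)
        have 1: "f v - f x \<ge> d * (v - x) - e * (v - x)" using d(2)[OF vin] ux by (auto simp: abs_le_iff)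
        have du: "d * (u - x) = - (d * (x - u))" by (simp add: algebra_simps)
        have 2: "f x - f u \<ge> d * (x - u) - e * (x - u)" using d(2)[OF uin] ux du by (auto simp: abs_le_iff)
        have "d * (v - x) \<ge> 0" "d * (x - u) \<ge> 0" using d(1) ux by auto
        then show "- e * (Sup K - Inf K) \<le> \<Delta> K" unfolding \<Delta>_def using 1 2 K by (simp add: algebra_simps)
      qed
      also have "(\<Sum>(x,K)\<in>p2. - e * (Sup K - Inf K)) = - e * (\<Sum>(x,K)\<in>p2. Sup K - Inf K)"
        by (simp add: sum_distrib_left case_prod_beta)
      also have "\<dots> \<ge> - e * (b - a)"
      proof -
        have "(\<Sum>(x,K)\<in>p2. Sup K - Inf K) \<le> (\<Sum>(x,K)\<in>p. Sup K - Inf K)"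
        proof (rule sum_mono2[OF pfin])
          show "p2 \<subseteq> p" unfolding p2_def by auto
          show "0 \<le> (case b of (x, K) \<Rightarrow> Sup K - Inf K)" if "b \<in> p - p2" for b
            using that elem by (cases b) force
        qed
        then show ?thesis using total_len e by simp
      qed
      finally show ?thesis by simp
    qed
    have s1: "(\<Sum>(x,K)\<in>p1. \<Delta> K) > - e"
    proof -
      define g where "g = (\<lambda>(x::real,K::real set). (Inf K, Sup K))"
      define I where "I = g ` p1"
      have p1p: "p1 \<subseteq> p" unfolding p1_def by auto
      have inj: "inj_on g p1"
      proof (rule inj_onI)
        fix k1 k2 assume k: "k1 \<in> p1" "k2 \<in> p1" "g k1 = g k2"
        obtain x1 K1 where k1: "k1 = (x1,K1)" by (cases k1)
        obtain x2 K2 where k2: "k2 = (x2,K2)" by (cases k2)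
        have m1: "(x1,K1) \<in> p" "Inf K1 < Sup K1" using k k1 p1p unfolding p1_def by auto
        have m2: "(x2,K2) \<in> p" using k k2 p1p by auto
        obtain u1 v1 where K1: "K1 = {u1..v1}" "Inf K1 = u1" "Sup K1 = v1"
          using elem[OF m1(1)] by blast
        have uv1: "u1 < v1" using K1 m1 by simp
        obtain u2 v2 where K2: "K2 = {u2..v2}" "Inf K2 = u2" "Sup K2 = v2"
          using elem[OF m2] by blast
        have KK: "K1 = K2" using k(3) K1 K2 unfolding k1 k2 g_def by auto
        show "k1 = k2"
        proof (rule ccontr)
          assume "k1 \<noteq> k2"
          then have "interior K1 \<inter> interior K2 = {}"
            using tagged_division_ofD(5)[OF p, of x1 K1 x2 K2] k p1p unfolding k1 k2 by auto
          then show False using KK K1 uv1 by (auto simp: interior_atLeastAtMost_real)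
        qed
      qed
      have sum_eq: "(\<Sum>(x,K)\<in>p1. \<bar>\<Delta> K\<bar>) = (\<Sum>(u,v)\<in>I. norm (f v - f u))"
        unfolding I_def by (subst sum.reindex[OF inj]) (auto simp: g_def \<Delta>_def case_prod_beta)
      have len_eq: "(\<Sum>(u,v)\<in>I. v - u) = (\<Sum>(u,v)\<in>I. measure lebesgue {u..v})"
      proof (rule sum.cong[OF refl])
        fix q assume "q \<in> I"
        then obtain x K where q: "q = (Inf K, Sup K)" "(x,K) \<in> p1" unfolding I_def g_def by auto
        then have "Inf K < Sup K" unfolding p1_def by auto
        then show "(case q of (u, v) \<Rightarrow> v - u) = (case q of (u, v) \<Rightarrow> measure lebesgue {u..v})"
          using q by simp
      qed
      have finI: "finite I" unfolding I_def using fins by simp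
      have Icond: "\<forall>(u,v)\<in>I. u \<le> v \<and> {u..v} \<subseteq> {a..b}"
      proof safe
        fix u v assume "(u,v) \<in> I"
        then obtain x K where q: "u = Inf K" "v = Sup K" "(x,K) \<in> p1" unfolding I_def g_def by auto
        have xKp: "(x,K) \<in> p" using q p1p by auto
        obtain u' v' where K: "K = {u'..v'}" "u' \<le> v'" "K \<subseteq> {a..b}" "Inf K = u'" "Sup K = v'"
          using elem[OF xKp] by blast
        show "u \<le> v" using K q by simp
        fix z assume "z \<in> {u..v}" then show "z \<in> {a..b}" using K q by auto
      qed
      have Ipair: "pairwise (\<lambda>(a,b) (c,d). {a<..<b} \<inter> {c<..<d} = {}) I"
      proof (rule pairwiseI)
        fix q r assume qr: "q \<in> I" "r \<in> I" "q \<noteq> r"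
        obtain x1 K1 where q: "q = (Inf K1, Sup K1)" "(x1,K1) \<in> p1" using qr(1) unfolding I_def g_def by auto
        obtain x2 K2 where r: "r = (Inf K2, Sup K2)" "(x2,K2) \<in> p1" using qr(2) unfolding I_def g_def by auto
        have k: "(x1,K1) \<noteq> (x2,K2)" using qr(3) q r by auto
        have m1: "(x1,K1) \<in> p" "(x2,K2) \<in> p" using q r p1p by auto
        obtain u1 v1 where K1: "K1 = {u1..v1}" "Inf K1 = u1" "Sup K1 = v1"
          using elem[OF m1(1)] by blast
        obtain u2 v2 where K2: "K2 = {u2..v2}" "Inf K2 = u2" "Sup K2 = v2"
          using elem[OF m1(2)] by blast
        have "interior K1 \<inter> interior K2 = {}"
          using tagged_division_ofD(5)[OF p m1 k] .
        then show "(case q of (a, b) \<Rightarrow> \<lambda>(c, d). {a<..<b} \<inter> {c<..<d} = {}) r"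
          using K1 K2 q r by (simp add: interior_atLeastAtMost_real)
      qed
      have negl: "pairwise (\<lambda>q r. negligible ((case q of (u,v) \<Rightarrow> {u..v}) \<inter> (case r of (u,v) \<Rightarrow> {u..v}))) I"
      proof (rule pairwiseI)
        fix q r assume qr: "q \<in> I" "r \<in> I" "q \<noteq> r"
        obtain u1 v1 where q: "q = (u1,v1)" by (cases q)
        obtain u2 v2 where r: "r = (u2,v2)" by (cases r)
        have "{u1<..<v1} \<inter> {u2<..<v2} = {}" using Ipair qr unfolding pairwise_def q r by auto
        then have "{u1..v1} \<inter> {u2..v2} \<subseteq> {u1,v1,u2,v2}" by auto
        then show "negligible ((case q of (u,v) \<Rightarrow> {u..v}) \<inter> (case r of (u,v) \<Rightarrow> {u..v}))"
          unfolding q r using negligible_subset[OF negligible_finite[of "{u1,v1,u2,v2}"]] by simp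
      qed
      have "(\<Sum>(u,v)\<in>I. measure lebesgue {u..v}) = measure lebesgue (\<Union>q\<in>I. (case q of (u,v) \<Rightarrow> {u..v}))"
        using measure_negligible_finite_Union_image[OF finI _ negl] by (simp add: case_prod_beta)
      also have "\<dots> \<le> measure lebesgue T"
      proof (rule measure_mono_fmeasurable[OF _ _ Tm])
        show "(\<Union>q\<in>I. (case q of (u,v) \<Rightarrow> {u..v})) \<subseteq> T"
        proof safe
          fix u v z assume "(u,v) \<in> I" "z \<in> {u..v}"
          then obtain x K where q: "u = Inf K" "v = Sup K" "(x,K) \<in> p1" unfolding I_def g_def by auto
          then have xT: "x \<in> T" unfolding p1_def by auto
          have xKp: "(x,K) \<in> p" using q p1p by auto
          obtain u' v' where K: "K = {u'..v'}" "K \<subseteq> ball x (\<rho> x)" "Inf K = u'" "Sup K = v'"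
            using elem[OF xKp] by blast
          have "ball x (\<rho> x) \<subseteq> T" using \<rho>[of x] xT unfolding P_def by auto
          then show "z \<in> T" using K q \<open>z \<in> {u..v}\<close> by auto
        qed
        show "(\<Union>q\<in>I. (case q of (u,v) \<Rightarrow> {u..v})) \<in> sets lebesgue"
          using finI by (intro sets.finite_UN) auto
      qed
      finally have "(\<Sum>(u,v)\<in>I. v - u) < \<delta>" using len_eq mT by simp
      then have "(\<Sum>(u,v)\<in>I. norm (f v - f u)) < e" using H[OF finI Icond Ipair] by simp
      then have "(\<Sum>(x,K)\<in>p1. \<bar>\<Delta> K\<bar>) < e" using sum_eq by simp
      moreover have "- (\<Sum>(x,K)\<in>p1. \<bar>\<Delta> K\<bar>) \<le> (\<Sum>(x,K)\<in>p1. \<Delta> K)"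
        by (simp add: sum_negf[symmetric] case_prod_beta sum_mono)
      ultimately show ?thesis by linarith
    qed
    have "f b - f a \<ge> - e - e * (b - a)"
      using total sum_split s1 s2 s3 by linarith
    then show ?thesis by (simp add: algebra_simps)
  qed
  show ?thesis
  proof (rule ccontr)
    assume "\<not> f a \<le> f b"
    then have pos: "f a - f b > 0" by simp
    define e where "e = (f a - f b) / (2 * (b - a + 1))"
    have "e > 0" using pos ab unfolding e_def by simp
    have "e * (b - a + 1) = (f a - f b) / 2" unfolding e_def using ab by (simp add: field_simps)
    with key[OF \<open>e > 0\<close>] have "f a - f b \<le> (f a - f b) / 2" by simp
    then show False using pos by simp
  qed
qed

lemma integral_lipschitz:
  fixes g :: "real \<Rightarrow> 'a::euclidean_space"
  assumes g: "continuous_on {a..b} g"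
  obtains B where "\<And>x y. x \<in> {a..b} \<Longrightarrow> y \<in> {a..b} \<Longrightarrow>
     norm (integral {a..x} g - integral {a..y} g) \<le> B * \<bar>x - y\<bar>"
proof -
  have "bounded (g ` {a..b})"
    by (intro compact_imp_bounded compact_continuous_image g) simp
  then obtain B where B: "B > 0" "\<And>x. x \<in> {a..b} \<Longrightarrow> norm (g x) \<le> B"
    unfolding bounded_pos by auto
  have main: "norm (integral {a..x} g - integral {a..y} g) \<le> B * (x - y)"
    if xy: "x \<in> {a..b}" "y \<in> {a..b}" "y \<le> x" for x y
  proof -
    have gi: "g integrable_on {a..x}" using xy by (intro integrable_continuous_real continuous_on_subset[OF g]) auto
    have "integral {a..y} g + integral {y..x} g = integral {a..x} g"
      using Henstock_Kurzweil_Integration.integral_combine[where f=g and a=a and c=y and b=x] xy gi by auto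
    then have eq: "integral {a..x} g - integral {a..y} g = integral {y..x} g"
      by (simp add: algebra_simps)
    have "(g has_integral integral {y..x} g) {y..x}"
      using xy by (intro integrable_integral integrable_continuous_real continuous_on_subset[OF g]) auto
    then have "norm (integral {y..x} g) \<le> B * Henstock_Kurzweil_Integration.content {y..x}"
      using B xy by (intro has_integral_bound_real[where S="{}"]) auto
    then show ?thesis unfolding eq using xy by simp
  qed
  show ?thesis
  proof (rule that[of B])
    fix x y assume xy: "x \<in> {a..b}" "y \<in> {a..b}"
    show "norm (integral {a..x} g - integral {a..y} g) \<le> B * \<bar>x - y\<bar>"
    proof (cases "y \<le> x")
      case True then show ?thesis using main[OF xy] by simp
    next
      case False
      then have "norm (integral {a..y} g - integral {a..x} g) \<le> B * (y - x)"
        using main[of y x] xy by simp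
      then show ?thesis using False by (simp add: norm_minus_commute)
    qed
  qed
qed

lemma ac_integral:
  fixes g :: "real \<Rightarrow> 'a::euclidean_space"
  assumes g: "continuous_on {a..b} g"
  shows "absolutely_continuous_on (\<lambda>x. integral {a..x} g) {a..b}"
proof -
  obtain B where B: "\<And>x y. x \<in> {a..b} \<Longrightarrow> y \<in> {a..b} \<Longrightarrow>
     norm (integral {a..x} g - integral {a..y} g) \<le> B * \<bar>x - y\<bar>"
    using integral_lipschitz[OF g] by blast
  show ?thesis by (rule ac_lipschitz[OF B])
qed

lemma ac_ftc_ge:
  fixes f g :: "real \<Rightarrow> real"
  assumes ac: "absolutely_continuous_on f {a..b}" and ab: "a \<le> b" and N: "negligible N"
    and g: "continuous_on {a..b} g"
    and der: "\<And>x. x \<in> {a..b} - N \<Longrightarrow> \<exists>d. (f has_real_derivative d) (at x) \<and> d \<ge> g x"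
  shows "integral {a..b} g \<le> f b - f a"
proof -
  define h where "h x = f x - integral {a..x} g" for x
  have ach: "absolutely_continuous_on h {a..b}"
    unfolding h_def diff_conv_add_uminus
    by (intro ac_add ac_linear[OF bounded_linear_minus[OF bounded_linear_ident]] ac ac_integral g)
  have N': "negligible (N \<union> {a,b})" using N by simp
  have "h a \<le> h b"
  proof (rule ac_mono0[OF ach ab N'])
    fix x assume x: "x \<in> {a..b} - (N \<union> {a,b})"
    then have x': "x \<in> {a..b} - N" "a < x" "x < b" by auto
    obtain d where d: "(f has_real_derivative d) (at x)" "d \<ge> g x" using der[OF x'(1)] by blast
    have "((\<lambda>u. integral {a..u} g) has_vector_derivative g x) (at x within {a..b})"
      using x' by (intro integral_has_vector_derivative g) auto
    then have "((\<lambda>u. integral {a..u} g) has_real_derivative g x) (at x)"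
      using x' by (simp add: at_within_Icc_at has_real_derivative_iff_has_vector_derivative)
    then have "(h has_real_derivative d - g x) (at x)"
      unfolding h_def by (intro DERIV_diff d(1))
    then show "\<exists>d. (h has_real_derivative d) (at x) \<and> d \<ge> 0" using d(2) by auto
  qed
  then show ?thesis unfolding h_def by simp
qed

lemma ac_ftc_real:
  fixes f g :: "real \<Rightarrow> real"
  assumes ac: "absolutely_continuous_on f {a..b}" and ab: "a \<le> b" and N: "negligible N"
    and g: "continuous_on {a..b} g"
    and der: "\<And>x. x \<in> {a..b} - N \<Longrightarrow> (f has_real_derivative g x) (at x)"
  shows "f b - f a = integral {a..b} g"
proof -
  have 1: "integral {a..b} g \<le> f b - f a"
    using der by (intro ac_ftc_ge[OF ac ab N g]) auto
  have acm: "absolutely_continuous_on (\<lambda>x. - f x) {a..b}"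
    by (intro ac_linear[OF bounded_linear_minus[OF bounded_linear_ident] ac])
  have gm: "continuous_on {a..b} (\<lambda>x. - g x)" using g by (intro continuous_intros)
  have "integral {a..b} (\<lambda>x. - g x) \<le> (- f b) - (- f a)"
    using der by (intro ac_ftc_ge[OF acm ab N gm]) (auto intro: DERIV_minus)
  then have 2: "f b - f a \<le> integral {a..b} g" by simp
  show ?thesis using 1 2 by simp
qed

lemma ac_ftc:
  fixes f g :: "real \<Rightarrow> 'a::euclidean_space"
  assumes ac: "absolutely_continuous_on f {a..b}" and ab: "a \<le> b" and N: "negligible N"
    and g: "continuous_on {a..b} g"
    and der: "\<And>x. x \<in> {a..b} - N \<Longrightarrow> (f has_vector_derivative g x) (at x)"
  shows "f b - f a = integral {a..b} g"
proof (rule euclidean_eqI)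
  fix i :: 'a assume i: "i \<in> Basis"
  have bl: "bounded_linear (\<lambda>v::'a. v \<bullet> i)" by (rule bounded_linear_inner_left)
  have "(\<lambda>x. f x \<bullet> i) b - (\<lambda>x. f x \<bullet> i) a = integral {a..b} (\<lambda>x. g x \<bullet> i)"
  proof (rule ac_ftc_real[OF _ ab N])
    show "absolutely_continuous_on (\<lambda>x. f x \<bullet> i) {a..b}" by (rule ac_linear[OF bl ac])
    show "continuous_on {a..b} (\<lambda>x. g x \<bullet> i)" using g by (intro continuous_intros)
    fix x assume "x \<in> {a..b} - N"
    then have "((\<lambda>x. f x \<bullet> i) has_vector_derivative g x \<bullet> i) (at x)"
      using bounded_linear.has_vector_derivative[OF bl der] by blast
    then show "((\<lambda>x. f x \<bullet> i) has_real_derivative g x \<bullet> i) (at x)"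
      by (simp add: has_real_derivative_iff_has_vector_derivative)
  qed
  also have "\<dots> = integral {a..b} g \<bullet> i"
    using integral_linear[OF integrable_continuous_real[OF g] bl] by (simp add: o_def)
  finally show "(f b - f a) \<bullet> i = integral {a..b} g \<bullet> i" by (simp add: inner_diff_left)
qed

lemma ac_C1:
  fixes f g :: "real \<Rightarrow> 'a::euclidean_space"
  assumes ac: "absolutely_continuous_on f {a..b}" and N: "negligible N"
    and g: "continuous_on {a..b} g"
    and der: "\<And>x. x \<in> {a..b} - N \<Longrightarrow> (f has_vector_derivative g x) (at x)"
  shows "\<And>x. x \<in> {a..b} \<Longrightarrow> f x = f a + integral {a..x} g"
    and "\<And>x. x \<in> {a..b} \<Longrightarrow> (f has_vector_derivative g x) (at x within {a..b})"
proof -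
  show eq: "f x = f a + integral {a..x} g" if x: "x \<in> {a..b}" for x
  proof -
    have sub: "{a..x} \<subseteq> {a..b}" using x by auto
    have "f x - f a = integral {a..x} g"
    proof (rule ac_ftc[OF ac_subset'[OF ac sub] _ N continuous_on_subset[OF g sub]])
      show "a \<le> x" using x by auto
      fix y assume "y \<in> {a..x} - N" then show "(f has_vector_derivative g y) (at y)"
        using sub by (intro der) auto
    qed
    then show ?thesis by (simp add: algebra_simps)
  qed
  fix x assume x: "x \<in> {a..b}"
  have "((\<lambda>u. integral {a..u} g) has_vector_derivative g x) (at x within {a..b})"
    by (rule integral_has_vector_derivative[OF g x])
  from has_vector_derivative_add[OF has_vector_derivative_const this]
  have "((\<lambda>u. f a + integral {a..u} g) has_vector_derivative g x) (at x within {a..b})" by simp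
  then show "(f has_vector_derivative g x) (at x within {a..b})"
  proof (rule has_vector_derivative_transform_within[where d=1])
    fix x' assume "x' \<in> {a..b}"
    then show "f a + integral {a..x'} g = f x'" using eq[of x'] by simp
  qed (use x in auto)
qed

lemma cinner_scal: "inner (c * x) (c * y) = (cmod c)\<^sup>2 * inner x y" for c x y :: complex
proof -
  have h: "(cmod c)\<^sup>2 = (Re c)\<^sup>2 + (Im c)\<^sup>2" by (simp add: cmod_power2)
  show ?thesis unfolding h by (simp add: inner_complex_def power2_eq_square algebra_simps)
qed

lemma cvec_inner_scal:
  fixes u w :: "complex^'n"
  shows "inner (c *s u) (c *s w) = (cmod c)\<^sup>2 * inner u w"
  by (simp add: inner_vec_def vector_scalar_mult_def cinner_scal sum_distrib_left)

lemma cvec_inner_real_scal: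
  fixes u w :: "complex^'n"
  shows "inner (complex_of_real r *s u) w = r * inner u w"
  by (simp add: inner_vec_def vector_scalar_mult_def inner_complex_def sum_distrib_left algebra_simps)

lemma cvec_norm_scal:
  fixes u :: "complex^'n"
  shows "norm (c *s u) = cmod c * norm u"
proof -
  have "(norm (c *s u))\<^sup>2 = (cmod c * norm u)\<^sup>2"
    by (simp add: power2_norm_eq_inner cvec_inner_scal power_mult_distrib)
  then show ?thesis by (simp add: power2_eq_iff_nonneg)
qed

lemma complexify_bound:
  fixes M :: "real^'n^'n" and v :: "complex^'n"
  shows "inner (complexify M *v v) v \<le> onorm ((*v) M) * inner v v"
proof -
  define a where "a = (\<chi> i. Re (v$i))"
  define b where "b = (\<chi> i. Im (v$i))"
  have comp: "(complexify M *v v)$i = Complex ((M *v a)$i) ((M *v b)$i)" for i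
    by (rule complex_eqI)
       (simp_all add: matrix_vector_mult_def complexify_def a_def b_def Re_sum Im_sum)
  have e1: "inner (complexify M *v v) v = inner (M *v a) a + inner (M *v b) b"
    by (simp add: inner_vec_def comp inner_complex_def a_def b_def sum.distrib)
  have e2: "inner v v = inner a a + inner b b"
    by (simp add: inner_vec_def inner_complex_def a_def b_def sum.distrib)
  have bl: "bounded_linear ((*v) M)" by (rule matrix_vector_mul_bounded_linear)
  have q: "inner (M *v z) z \<le> onorm ((*v) M) * inner z z" for z :: "real^'n"
  proof -
    have "inner (M *v z) z \<le> norm (M *v z) * norm z" by (rule norm_cauchy_schwarz)
    also have "\<dots> \<le> (onorm ((*v) M) * norm z) * norm z"
      by (intro mult_right_mono onorm[OF bl]) auto
    finally show ?thesis by (simp add: power2_norm_eq_inner[symmetric] power2_eq_square algebra_simps)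
  qed
  show ?thesis using q[of a] q[of b] unfolding e1 e2 by (simp add: algebra_simps)
qed

lemma has_real_derivative_inner:
  fixes f g :: "real \<Rightarrow> 'a::real_inner"
  assumes "(f has_vector_derivative f') (at x)" "(g has_vector_derivative g') (at x)"
  shows "((\<lambda>t. inner (f t) (g t)) has_real_derivative (inner f' (g x) + inner (f x) g')) (at x)"
proof -
  have "((\<lambda>t. inner (f t) (g t)) has_derivative (\<lambda>h. inner (f x) (h *\<^sub>R g') + inner (h *\<^sub>R f') (g x))) (at x)"
    using assms unfolding has_vector_derivative_def by (rule has_derivative_inner)
  moreover have "(\<lambda>h. inner (f x) (h *\<^sub>R g') + inner (h *\<^sub>R f') (g x)) = (\<lambda>h. (inner f' (g x) + inner (f x) g') * h)"
    by (auto simp: algebra_simps)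
  ultimately show ?thesis by (simp add: has_field_derivative_def)
qed

lemma energy:
  fixes y y1 :: "real \<Rightarrow> complex^'n" and V :: "real \<Rightarrow> real^'n^'n"
  assumes s: "s > 0"
    and acy: "absolutely_continuous_on y {-s..s}" and acy1: "absolutely_continuous_on y1 {-s..s}"
    and N: "negligible N"
    and d0: "\<And>x. x \<in> {-s..s} - N \<Longrightarrow> (y has_vector_derivative y1 x) (at x)"
    and d1: "\<And>x. x \<in> {-s..s} - N \<Longrightarrow>
              (y1 has_vector_derivative (complex_of_real lam *s y x - complexify (V x) *v y x)) (at x)"
    and bnd: "\<And>x v. x \<in> {-s..s} \<Longrightarrow> inner (complexify (V x) *v v) v \<le> K * inner v v"
    and bc0: "y s = c *s y (-s)" and bc1: "y1 s = c *s y1 (-s)" and c: "cmod c = 1"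
  shows "integral {-s..s} (\<lambda>x. inner (y1 x) (y1 x) + (lam - K) * inner (y x) (y x)) \<le> 0"
proof -
  define F where "F x = inner (y1 x) (y x)" for x
  have acF: "absolutely_continuous_on F {-s..s}"
    unfolding F_def by (rule ac_bilinear[OF bounded_bilinear_inner acy1 acy])
  have cy: "continuous_on {-s..s} y" by (rule ac_continuous_on[OF acy])
  have cy1: "continuous_on {-s..s} y1" by (rule ac_continuous_on[OF acy1])
  have cg: "continuous_on {-s..s} (\<lambda>x. inner (y1 x) (y1 x) + (lam - K) * inner (y x) (y x))"
    using cy cy1 by (intro continuous_intros)
  have "integral {-s..s} (\<lambda>x. inner (y1 x) (y1 x) + (lam - K) * inner (y x) (y x)) \<le> F s - F (-s)"
  proof (rule ac_ftc_ge[OF acF _ N cg])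
    show "-s \<le> s" using s by simp
    fix x assume x: "x \<in> {-s..s} - N"
    let ?D = "inner (complex_of_real lam *s y x - complexify (V x) *v y x) (y x) + inner (y1 x) (y1 x)"
    have "(F has_real_derivative ?D) (at x)"
      unfolding F_def by (rule has_real_derivative_inner[OF d1[OF x] d0[OF x]])
    moreover have "?D \<ge> inner (y1 x) (y1 x) + (lam - K) * inner (y x) (y x)"
    proof -
      have "inner (complexify (V x) *v y x) (y x) \<le> K * inner (y x) (y x)" using bnd x by auto
      then show ?thesis by (simp add: inner_diff_left cvec_inner_real_scal algebra_simps)
    qed
    ultimately show "\<exists>d. (F has_real_derivative d) (at x) \<and> d \<ge> inner (y1 x) (y1 x) + (lam - K) * inner (y x) (y x)"
      by blast
  qed
  moreover have "F s = F (-s)" unfolding F_def bc0 bc1 cvec_inner_scal c by simp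
  ultimately show ?thesis by simp
qed

lemma cont_int_zero:
  fixes h :: "real \<Rightarrow> real"
  assumes "a < b" "continuous_on {a..b} h" "\<And>x. x \<in> {a..b} \<Longrightarrow> h x \<ge> 0"
    "integral {a..b} h \<le> 0" "x \<in> {a..b}"
  shows "h x = 0"
proof -
  have int: "h integrable_on {a..b}" using assms(2) by (rule integrable_continuous_real)
  have "integral {a..b} h \<ge> 0" using assms(3) by (intro integral_nonneg int) auto
  then have "integral {a..b} h = 0" using assms(4) by simp
  then have "(h has_integral 0) {a..b}" using int by (metis has_integral_integral)
  then show ?thesis
    using has_integral_0_cbox_imp_0[of "a" "b" h x] assms by auto
qed

lemma wirt_half:
  fixes g g' :: "real \<Rightarrow> complex^'n"
  assumes ab: "a < b"
    and der: "\<And>x. x \<in> {a..b} \<Longrightarrow> (g has_vector_derivative g' x) (at x within {a..b})"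
    and cg': "continuous_on {a..b} g'"
    and bc: "g b = \<mu> *s g a" and mu: "cmod \<mu> = 1"
  shows "(cmod (\<mu> - 1))\<^sup>2 * integral {a..b} (\<lambda>x. (norm (g x))\<^sup>2)
           \<le> (b - a)\<^sup>2 * integral {a..b} (\<lambda>x. (norm (g' x))\<^sup>2)"
proof -
  have cg: "continuous_on {a..b} g"
    unfolding continuous_on_eq_continuous_within using der has_vector_derivative_continuous by blast
  have cn: "continuous_on {a..b} (\<lambda>x. norm (g' x))" using cg' by (intro continuous_intros)
  have intn: "(\<lambda>x. norm (g' x)) integrable_on {u..v}" if "{u..v} \<subseteq> {a..b}" for u v
    using that by (intro integrable_continuous_real continuous_on_subset[OF cn])
  have ftc: "g v - g u = integral {u..v} g'" if uv: "a \<le> u" "u \<le> v" "v \<le> b" for u v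
  proof -
    have "(g' has_integral g v - g u) {u..v}"
      using uv by (intro fundamental_theorem_of_calculus)
         (auto intro: has_vector_derivative_within_subset[OF der])
    then show ?thesis by (simp add: integral_unique)
  qed
  have nb: "norm (g v - g u) \<le> integral {u..v} (\<lambda>x. norm (g' x))" if uv: "a \<le> u" "u \<le> v" "v \<le> b" for u v
  proof -
    have "g' integrable_on {u..v}"
      using uv by (intro integrable_continuous_real continuous_on_subset[OF cg']) auto
    then show ?thesis unfolding ftc[OF uv]
      using uv by (intro integral_norm_bound_integral intn) auto
  qed
  define J where "J = integral {a..b} (\<lambda>x. norm (g' x))"
  define Q where "Q = integral {a..b} (\<lambda>x. (norm (g' x))\<^sup>2)"
  have pw: "cmod (\<mu> - 1) * norm (g x) \<le> J" if x: "x \<in> {a..b}" for x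
  proof -
    have eq: "(\<mu> - 1) *s g x = \<mu> *s (g x - g a) + (g b - g x)"
      unfolding bc by (simp add: vec_eq_iff vector_scalar_mult_def algebra_simps)
    have "cmod (\<mu> - 1) * norm (g x) = norm ((\<mu> - 1) *s g x)" by (rule cvec_norm_scal[symmetric])
    also have "\<dots> \<le> norm (\<mu> *s (g x - g a)) + norm (g b - g x)" unfolding eq by (rule norm_triangle_ineq)
    also have "\<dots> = norm (g x - g a) + norm (g b - g x)" by (subst cvec_norm_scal) (simp add: mu)
    also have "\<dots> \<le> integral {a..x} (\<lambda>x. norm (g' x)) + integral {x..b} (\<lambda>x. norm (g' x))"
      using x by (intro add_mono nb) auto
    also have "\<dots> = J" unfolding J_def
      using x by (intro Henstock_Kurzweil_Integration.integral_combine intn) auto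
    finally show ?thesis .
  qed
  have J0: "J \<ge> 0" unfolding J_def by (intro integral_nonneg intn) auto
  have cs: "J\<^sup>2 \<le> (b - a) * Q"
  proof -
    define t where "t = J / (b - a)"
    have c2: "continuous_on {a..b} (\<lambda>x. (norm (g' x))\<^sup>2)" using cg' by (intro continuous_intros)
    have "0 \<le> integral {a..b} (\<lambda>x. (norm (g' x) - t)\<^sup>2)"
      using cg' by (intro integral_nonneg integrable_continuous_real continuous_intros) auto
    also have "integral {a..b} (\<lambda>x. (norm (g' x) - t)\<^sup>2)
        = integral {a..b} (\<lambda>x. (norm (g' x))\<^sup>2 - 2 * t * norm (g' x) + t\<^sup>2)"
      by (simp add: power2_diff algebra_simps)
    also have "\<dots> = Q - 2 * t * J + t\<^sup>2 * (b - a)"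
    proof -
      have i1: "(\<lambda>x. (norm (g' x))\<^sup>2) integrable_on {a..b}" by (rule integrable_continuous_real[OF c2])
      have i2: "(\<lambda>x. 2 * t * norm (g' x)) integrable_on {a..b}"
        by (intro integrable_continuous_real continuous_intros cg')
      have "integral {a..b} (\<lambda>x. (norm (g' x))\<^sup>2 - 2 * t * norm (g' x) + t\<^sup>2)
          = integral {a..b} (\<lambda>x. (norm (g' x))\<^sup>2 - 2 * t * norm (g' x)) + integral {a..b} (\<lambda>x. t\<^sup>2)"
        using i1 i2 by (intro integral_add integrable_diff) auto
      also have "integral {a..b} (\<lambda>x. (norm (g' x))\<^sup>2 - 2 * t * norm (g' x))
          = Q - integral {a..b} (\<lambda>x. 2 * t * norm (g' x))"
        unfolding Q_def using i1 i2 by (intro integral_diff) auto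
      also have "integral {a..b} (\<lambda>x. 2 * t * norm (g' x)) = 2 * t * J"
        unfolding J_def by (rule integral_mult_right)
      also have "integral {a..b} (\<lambda>x. t\<^sup>2) = t\<^sup>2 * (b - a)" using ab by simp
      finally show ?thesis .
    qed
    finally have "0 \<le> Q - 2 * t * J + t\<^sup>2 * (b - a)" .
    moreover have "2 * t * J - t\<^sup>2 * (b - a) = J\<^sup>2 / (b - a)"
    proof -
      define w where "w = b - a"
      have w: "w > 0" using ab unfolding w_def by simp
      have "2 * (J / w) * J - (J / w)\<^sup>2 * w = J\<^sup>2 / w"
        using w by (simp add: field_simps power2_eq_square)
      then show ?thesis unfolding t_def w_def .
    qed
    ultimately have "J\<^sup>2 / (b - a) \<le> Q" by linarith
    then show ?thesis using ab by (simp add: field_simps)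
  qed
  have "integral {a..b} (\<lambda>x. (cmod (\<mu> - 1))\<^sup>2 * (norm (g x))\<^sup>2) \<le> integral {a..b} (\<lambda>x. J\<^sup>2)"
  proof (rule integral_le)
    show "(\<lambda>x. (cmod (\<mu> - 1))\<^sup>2 * (norm (g x))\<^sup>2) integrable_on {a..b}"
      using cg by (intro integrable_continuous_real continuous_intros)
    show "(\<lambda>x. J\<^sup>2) integrable_on {a..b}" by (rule integrable_const_ivl)
    fix x assume x: "x \<in> {a..b}"
    have "(cmod (\<mu> - 1) * norm (g x))\<^sup>2 \<le> J\<^sup>2"
      using pw[OF x] by (intro power_mono) auto
    then show "(cmod (\<mu> - 1))\<^sup>2 * (norm (g x))\<^sup>2 \<le> J\<^sup>2" by (simp add: power_mult_distrib)
  qed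
  also have "\<dots> = J\<^sup>2 * (b - a)" using ab by simp
  also have "\<dots> \<le> (b - a) * Q * (b - a)" using cs ab by (intro mult_right_mono) auto
  finally have "(cmod (\<mu> - 1))\<^sup>2 * integral {a..b} (\<lambda>x. (norm (g x))\<^sup>2) \<le> (b - a) * Q * (b - a)"
    unfolding integral_mult_right .
  then show ?thesis unfolding Q_def by (simp add: power2_eq_square algebra_simps)
qed

lemma bl_cscal: "bounded_linear (\<lambda>v::complex^'n. c *s v)"
proof (rule bounded_linear_intro[where K="cmod c"])
  fix u v :: "complex^'n"
  show "c *s (u + v) = c *s u + c *s v" by (simp add: vec_eq_iff vector_scalar_mult_def algebra_simps)
next
  fix r :: real and u :: "complex^'n"
  show "c *s (r *\<^sub>R u) = r *\<^sub>R (c *s u)"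
    by (simp add: vec_eq_iff vector_scalar_mult_def scaleR_conv_of_real algebra_simps)
next
  fix u :: "complex^'n"
  show "norm (c *s u) \<le> norm u * cmod c" by (simp add: cvec_norm_scal)
qed

lemma norm_sq_parallel:
  fixes u w :: "complex^'n"
  assumes "cmod \<beta> = 1"
  shows "(norm (u + \<beta> *s w))\<^sup>2 + (norm (u + (- \<beta>) *s w))\<^sup>2 = 2 * (norm u)\<^sup>2 + 2 * (norm w)\<^sup>2"
proof -
  have m: "(- \<beta>) *s w = - (\<beta> *s w)" by (simp add: vec_eq_iff vector_scalar_mult_def)
  have n: "(norm (\<beta> *s w))\<^sup>2 = (norm w)\<^sup>2" using assms by (simp add: cvec_norm_scal)
  show ?thesis unfolding m using n
    by (simp add: power2_norm_eq_inner inner_add_left inner_add_right inner_commute algebra_simps)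
qed

lemma cmod_cis_minus1: "(cmod (exp (\<i> * complex_of_real t) - 1))\<^sup>2 = 2 - 2 * cos t"
proof -
  have e: "exp (\<i> * complex_of_real t) = Complex (cos t) (sin t)"
    by (rule complex_eqI) (simp_all add: Re_exp Im_exp)
  show ?thesis unfolding e cmod_power2
    using sin_cos_squared_add[of t] by (simp add: power2_diff algebra_simps)
qed

lemma cmod_cis_plus1: "(cmod (- exp (\<i> * complex_of_real t) - 1))\<^sup>2 = 2 + 2 * cos t"
proof -
  have e: "exp (\<i> * complex_of_real t) = Complex (cos t) (sin t)"
    by (rule complex_eqI) (simp_all add: Re_exp Im_exp)
  show ?thesis unfolding e cmod_power2
    using sin_cos_squared_add[of t] by (simp add: power2_diff power2_sum algebra_simps)
qed

lemma shift_sum: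
  fixes f :: "real \<Rightarrow> real"
  assumes s: "s > 0" and f: "continuous_on {-s..s} f"
  shows "integral {-s..0} (\<lambda>x. f x + f (s + x)) = integral {-s..s} f"
proof -
  have f1: "f integrable_on {-s..0}" using s by (intro integrable_continuous_real continuous_on_subset[OF f]) auto
  have cf2: "continuous_on {-s..0} (\<lambda>x. f (s + x))"
    by (rule continuous_on_compose2[OF f]) (use s in \<open>auto intro!: continuous_intros\<close>)
  have f2: "(\<lambda>x. f (s + x)) integrable_on {-s..0}" by (rule integrable_continuous_real[OF cf2])
  have "integral {-s..0} (\<lambda>x. f x + f (s + x)) = integral {-s..0} f + integral {-s..0} (\<lambda>x. f (s + x))"
    by (rule integral_add[OF f1 f2])
  also have "integral {-s..0} (\<lambda>x. f (s + x)) = integral {0..s} f"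
    using integral_shift_Icc_real[of "-s" 0 f s] by (simp add: o_def)
  also have "integral {-s..0} f + integral {0..s} f = integral {-s..s} f"
    using s by (intro Henstock_Kurzweil_Integration.integral_combine integrable_continuous_real f) auto
  finally show ?thesis .
qed

lemma wirtinger:
  fixes y y1 :: "real \<Rightarrow> complex^'n"
  assumes s: "s > 0"
    and der: "\<And>x. x \<in> {-s..s} \<Longrightarrow> (y has_vector_derivative y1 x) (at x within {-s..s})"
    and cy1: "continuous_on {-s..s} y1"
    and bc: "y s = exp (\<i> * complex_of_real \<theta>) *s y (-s)"
  shows "min (2 - 2 * cos (\<theta>/2)) (2 + 2 * cos (\<theta>/2)) * integral {-s..s} (\<lambda>x. (norm (y x))\<^sup>2)
         \<le> s\<^sup>2 * integral {-s..s} (\<lambda>x. (norm (y1 x))\<^sup>2)"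
proof -
  define E where "E = exp (\<i> * complex_of_real \<theta>)"
  define h where "h = exp (\<i> * complex_of_real (\<theta>/2))"
  define \<beta> where "\<beta> = exp (- (\<i> * complex_of_real (\<theta>/2)))"
  have hh: "h * h = E" unfolding h_def E_def by (simp add: exp_add[symmetric] field_simps)
  have \<beta>h: "\<beta> * h = 1" unfolding h_def \<beta>_def by (simp add: exp_minus)
  have c\<beta>: "cmod \<beta> = 1" unfolding \<beta>_def by (simp add: norm_exp_eq_Re)
  have cE: "cmod E = 1" unfolding E_def by (simp add: norm_exp_eq_Re)
  have cy: "continuous_on {-s..s} y"
    unfolding continuous_on_eq_continuous_within using der has_vector_derivative_continuous by blast
  have gen: "(cmod (\<gamma> * E - 1))\<^sup>2 * integral {-s..0} (\<lambda>x. (norm (y x + \<gamma> *s y (s + x)))\<^sup>2)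
      \<le> s\<^sup>2 * integral {-s..0} (\<lambda>x. (norm (y1 x + \<gamma> *s y1 (s + x)))\<^sup>2)"
    if \<gamma>: "\<gamma> * \<gamma> * E = 1" "cmod \<gamma> = 1" for \<gamma>
  proof -
    have "(cmod (\<gamma> * E - 1))\<^sup>2 * integral {-s..0} (\<lambda>x. (norm ((\<lambda>x. y x + \<gamma> *s y (s + x)) x))\<^sup>2)
      \<le> (0 - (-s))\<^sup>2 * integral {-s..0} (\<lambda>x. (norm ((\<lambda>x. y1 x + \<gamma> *s y1 (s + x)) x))\<^sup>2)"
    proof (rule wirt_half)
      show "-s < (0::real)" using s by simp
    next
      fix x assume x: "x \<in> {-s..0}"
      have d1: "(y has_vector_derivative y1 x) (at x within {-s..0})"
        using der[of x] x s by (auto intro: has_vector_derivative_within_subset)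
      have dl: "((\<lambda>x. s + x) has_vector_derivative 1) (at x within {-s..0})"
        by (auto intro!: derivative_eq_intros)
      have "(\<lambda>x. s + x) ` {-s..0} \<subseteq> {-s..s}" using s by auto
      moreover have "s + x \<in> {-s..s}" using x s by auto
      ultimately have "(y has_vector_derivative y1 (s + x)) (at (s + x) within (\<lambda>x. s + x) ` {-s..0})"
        using der[of "s + x"] by (auto intro: has_vector_derivative_within_subset)
      from vector_diff_chain_within[OF dl this]
      have d2: "((\<lambda>x. y (s + x)) has_vector_derivative y1 (s + x)) (at x within {-s..0})"
        by (simp add: o_def)
      have d3: "((\<lambda>x. \<gamma> *s y (s + x)) has_vector_derivative \<gamma> *s y1 (s + x)) (at x within {-s..0})"
        using bounded_linear.has_vector_derivative[OF bl_cscal d2] .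
      show "((\<lambda>x. y x + \<gamma> *s y (s + x)) has_vector_derivative y1 x + \<gamma> *s y1 (s + x)) (at x within {-s..0})"
        by (rule has_vector_derivative_add[OF d1 d3])
    next
      have c1: "continuous_on {-s..0} y1" using s by (intro continuous_on_subset[OF cy1]) auto
      have c2: "continuous_on {-s..0} (\<lambda>x. y1 (s + x))"
        by (rule continuous_on_compose2[OF cy1]) (use s in \<open>auto intro!: continuous_intros\<close>)
      have c3: "continuous_on {-s..0} (\<lambda>x. \<gamma> *s y1 (s + x))"
        by (rule bounded_linear.continuous_on[OF bl_cscal c2])
      show "continuous_on {-s..0} (\<lambda>x. y1 x + \<gamma> *s y1 (s + x))"
        by (intro continuous_on_add c1 c3)
    next
      have k: "\<gamma> * E * (\<gamma> * z) = (\<gamma> * \<gamma> * E) * z" for z by (simp add: algebra_simps)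
      have \<gamma>': "E * (\<gamma> * \<gamma>) = 1" using \<gamma>(1) by (simp add: algebra_simps)
      show "(\<lambda>x. y x + \<gamma> *s y (s + x)) 0 = (\<gamma> * E) *s (\<lambda>x. y x + \<gamma> *s y (s + x)) (-s)"
        using bc unfolding E_def[symmetric]
        by (simp add: vec_eq_iff vector_scalar_mult_def algebra_simps k \<gamma>(1) \<gamma>')
    next
      show "cmod (\<gamma> * E) = 1" by (simp add: norm_mult \<gamma>(2) cE)
    qed
    then show ?thesis by simp
  qed
  have b1: "\<beta> * \<beta> * E = 1" unfolding hh[symmetric] using \<beta>h by (simp add: algebra_simps)
  have b2: "(-\<beta>) * (-\<beta>) * E = 1" using b1 by simp
  have m1: "\<beta> * E = h" unfolding hh[symmetric] using \<beta>h by (simp add: algebra_simps)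
  have m2: "(-\<beta>) * E = - h" using m1 by simp
  have k1: "(cmod (\<beta> * E - 1))\<^sup>2 = 2 - 2 * cos (\<theta>/2)" unfolding m1 h_def by (rule cmod_cis_minus1)
  have k2: "(cmod ((-\<beta>) * E - 1))\<^sup>2 = 2 + 2 * cos (\<theta>/2)" unfolding m2 h_def by (rule cmod_cis_plus1)
  define m where "m = min (2 - 2 * cos (\<theta>/2)) (2 + 2 * cos (\<theta>/2))"
  define Y1 where "Y1 = integral {-s..0} (\<lambda>x. (norm (y x + \<beta> *s y (s + x)))\<^sup>2)"
  define Y2 where "Y2 = integral {-s..0} (\<lambda>x. (norm (y x + (-\<beta>) *s y (s + x)))\<^sup>2)"
  define D1 where "D1 = integral {-s..0} (\<lambda>x. (norm (y1 x + \<beta> *s y1 (s + x)))\<^sup>2)"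
  define D2 where "D2 = integral {-s..0} (\<lambda>x. (norm (y1 x + (-\<beta>) *s y1 (s + x)))\<^sup>2)"
  have g1: "(2 - 2 * cos (\<theta>/2)) * Y1 \<le> s\<^sup>2 * D1"
    using gen[OF b1 c\<beta>] unfolding k1 Y1_def D1_def .
  have g2: "(2 + 2 * cos (\<theta>/2)) * Y2 \<le> s\<^sup>2 * D2"
    using gen[OF b2] c\<beta> unfolding k2 Y2_def D2_def by simp
  have cont_sq: "continuous_on {-s..0} (\<lambda>x. (norm (z x + \<gamma> *s z (s + x)))\<^sup>2)"
    if cz: "continuous_on {-s..s} z" for z :: "real \<Rightarrow> complex^'n" and \<gamma>
  proof -
    have c1: "continuous_on {-s..0} z" using s by (intro continuous_on_subset[OF cz]) auto
    have c2: "continuous_on {-s..0} (\<lambda>x. z (s + x))"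
      by (rule continuous_on_compose2[OF cz]) (use s in \<open>auto intro!: continuous_intros\<close>)
    have c3: "continuous_on {-s..0} (\<lambda>x. \<gamma> *s z (s + x))"
      by (rule bounded_linear.continuous_on[OF bl_cscal c2])
    show ?thesis by (intro continuous_intros c1 c3)
  qed
  have Y1p: "Y1 \<ge> 0" unfolding Y1_def by (intro integral_nonneg integrable_continuous_real cont_sq cy) auto
  have Y2p: "Y2 \<ge> 0" unfolding Y2_def by (intro integral_nonneg integrable_continuous_real cont_sq cy) auto
  have "m * (Y1 + Y2) \<le> (2 - 2 * cos (\<theta>/2)) * Y1 + (2 + 2 * cos (\<theta>/2)) * Y2"
    unfolding m_def distrib_left using Y1p Y2p by (intro add_mono mult_right_mono) auto
  also have "\<dots> \<le> s\<^sup>2 * (D1 + D2)" using g1 g2 by (simp add: distrib_left)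
  finally have main: "m * (Y1 + Y2) \<le> s\<^sup>2 * (D1 + D2)" .
  have sumY: "Y1 + Y2 = 2 * integral {-s..s} (\<lambda>x. (norm (y x))\<^sup>2)" if
    "Y1 = integral {-s..0} (\<lambda>x. (norm (y x + \<beta> *s y (s + x)))\<^sup>2)"
    "Y2 = integral {-s..0} (\<lambda>x. (norm (y x + (-\<beta>) *s y (s + x)))\<^sup>2)"
    "continuous_on {-s..s} y"
    for y :: "real \<Rightarrow> complex^'n" and Y1 Y2
  proof -
    have "Y1 + Y2 = integral {-s..0} (\<lambda>x. (norm (y x + \<beta> *s y (s + x)))\<^sup>2 + (norm (y x + (-\<beta>) *s y (s + x)))\<^sup>2)"
      unfolding that(1,2)
      by (intro integral_add[symmetric] integrable_continuous_real cont_sq that(3))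
    also have "\<dots> = integral {-s..0} (\<lambda>x. 2 * ((norm (y x))\<^sup>2 + (norm (y (s + x)))\<^sup>2))"
      by (intro integral_cong) (simp only: norm_sq_parallel[OF c\<beta>] distrib_left)
    also have "\<dots> = 2 * integral {-s..0} (\<lambda>x. (norm (y x))\<^sup>2 + (norm (y (s + x)))\<^sup>2)"
      by (rule integral_mult_right)
    also have "integral {-s..0} (\<lambda>x. (norm (y x))\<^sup>2 + (norm (y (s + x)))\<^sup>2) = integral {-s..s} (\<lambda>x. (norm (y x))\<^sup>2)"
      using shift_sum[OF s, of "\<lambda>x. (norm (y x))\<^sup>2"] that(3) by (simp add: continuous_intros)
    finally show ?thesis .
  qed
  have sY: "Y1 + Y2 = 2 * integral {-s..s} (\<lambda>x. (norm (y x))\<^sup>2)"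
    by (rule sumY[OF Y1_def Y2_def cy])
  have sD: "D1 + D2 = 2 * integral {-s..s} (\<lambda>x. (norm (y1 x))\<^sup>2)"
    by (rule sumY[OF D1_def D2_def cy1])
  show ?thesis using main unfolding sY sD m_def by simp
qed

lemma pc_local_bound:
  assumes pc: "piecewise_continuous f" and x: "x \<in> {a..b}"
  shows "\<exists>e>0. \<exists>B. \<forall>y. \<bar>y - x\<bar> < e \<longrightarrow> \<bar>f y\<bar> \<le> B"
proof -
  obtain S where S: "finite S" "\<forall>x\<in>{a..b}-S. isCont f x"
     "\<forall>x\<in>S. (\<exists>l. (f \<longlongrightarrow> l) (at_left x)) \<and> (\<exists>r. (f \<longlongrightarrow> r) (at_right x))"
    using pc unfolding piecewise_continuous_def by blast
  show ?thesis
  proof (cases "x \<in> S")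
    case False
    then have ic: "isCont f x" using S x by auto
    have "\<exists>d>0. \<forall>y. dist y x < d \<longrightarrow> dist (f y) (f x) < 1"
      using mp[OF spec[OF ic[unfolded continuous_at_eps_delta], of 1]] by simp
    then obtain d where d: "d > 0" "\<And>y. dist y x < d \<Longrightarrow> dist (f y) (f x) < 1" by blast
    show ?thesis
    proof (rule exI[of _ d], intro conjI exI[of _ "\<bar>f x\<bar> + 1"] allI impI)
      fix y assume "\<bar>y - x\<bar> < d"
      then have "\<bar>f y - f x\<bar> < 1" using d(2)[of y] by (simp add: dist_real_def)
      then show "\<bar>f y\<bar> \<le> \<bar>f x\<bar> + 1" by linarith
    qed (rule d(1))
  next
    case True
    then obtain l r where l: "(f \<longlongrightarrow> l) (at_left x)" and r: "(f \<longlongrightarrow> r) (at_right x)" using S by blast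
    have "eventually (\<lambda>y. dist (f y) l < 1) (at_left x)" by (rule tendstoD[OF l]) simp
    then obtain b0 where b0: "b0 < x" "\<And>y. b0 < y \<Longrightarrow> y < x \<Longrightarrow> dist (f y) l < 1"
      unfolding eventually_at_left_field by blast
    have "eventually (\<lambda>y. dist (f y) r < 1) (at_right x)" by (rule tendstoD[OF r]) simp
    then obtain c0 where c0: "c0 > x" "\<And>y. x < y \<Longrightarrow> y < c0 \<Longrightarrow> dist (f y) r < 1"
      unfolding eventually_at_right_field by blast
    define e where "e = min (x - b0) (c0 - x)"
    define B where "B = max (\<bar>l\<bar> + 1) (max (\<bar>r\<bar> + 1) \<bar>f x\<bar>)"
    show ?thesis
    proof (rule exI[of _ e], intro conjI exI[of _ B] allI impI)
      show "e > 0" unfolding e_def using b0 c0 by simp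
      fix y assume y: "\<bar>y - x\<bar> < e"
      consider "y < x" | "y = x" | "y > x" by linarith
      then show "\<bar>f y\<bar> \<le> B"
      proof cases
        case 1
        then have "b0 < y" using y unfolding e_def by auto
        then have "\<bar>f y - l\<bar> < 1" using b0(2)[of y] 1 by (simp add: dist_real_def)
        then show ?thesis unfolding B_def by linarith
      next
        case 2 then show ?thesis unfolding B_def by simp
      next
        case 3
        then have "y < c0" using y unfolding e_def by auto
        then have "\<bar>f y - r\<bar> < 1" using c0(2)[of y] 3 by (simp add: dist_real_def)
        then show ?thesis unfolding B_def by linarith
      qed
    qed
  qed
qed

lemma pc_bounded:
  assumes pc: "piecewise_continuous f"
  shows "\<exists>B. \<forall>x\<in>{a..b}. \<bar>f x\<bar> \<le> B"
proof -
  have "\<forall>x\<in>{a..b}. \<exists>p. fst p > 0 \<and> (\<forall>y. \<bar>y - x\<bar> < fst p \<longrightarrow> \<bar>f y\<bar> \<le> snd p)"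
  proof
    fix x assume "x \<in> {a..b}"
    from pc_local_bound[OF pc this] obtain e B where "e > 0" "\<forall>y. \<bar>y - x\<bar> < e \<longrightarrow> \<bar>f y\<bar> \<le> B" by blast
    then show "\<exists>p. fst p > 0 \<and> (\<forall>y. \<bar>y - x\<bar> < fst p \<longrightarrow> \<bar>f y\<bar> \<le> snd p)"
      by (intro exI[of _ "(e,B)"]) auto
  qed
  then obtain p where p: "\<And>x. x \<in> {a..b} \<Longrightarrow> fst (p x) > 0 \<and> (\<forall>y. \<bar>y - x\<bar> < fst (p x) \<longrightarrow> \<bar>f y\<bar> \<le> snd (p x))"
    by metis
  have cov: "{a..b} \<subseteq> (\<Union>x\<in>{a..b}. ball x (fst (p x)))"
    using p by force
  obtain C where C: "C \<subseteq> {a..b}" "finite C" "{a..b} \<subseteq> (\<Union>x\<in>C. ball x (fst (p x)))"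
    using compactE_image[OF compact_Icc _ cov] by blast
  show ?thesis
  proof (intro exI[of _ "\<Sum>x\<in>C. \<bar>snd (p x)\<bar>"] ballI)
    fix z assume z: "z \<in> {a..b}"
    then obtain x where x: "x \<in> C" "z \<in> ball x (fst (p x))" using C by blast
    then have "\<bar>f z\<bar> \<le> snd (p x)" using p[of x] C(1) by (auto simp: dist_real_def abs_minus_commute)
    also have "\<dots> \<le> \<bar>snd (p x)\<bar>" by simp
    also have "\<dots> \<le> (\<Sum>x\<in>C. \<bar>snd (p x)\<bar>)" using x C(2) by (intro member_le_sum) auto
    finally show "\<bar>f z\<bar> \<le> (\<Sum>x\<in>C. \<bar>snd (p x)\<bar>)" .
  qed
qed

lemma Vnorm_props:
  fixes V :: "real \<Rightarrow> real^'n^'n"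
  assumes V_pc: "\<And>i j. piecewise_continuous (\<lambda>x. V x $ i $ j)" and L: "L > 0"
  shows "\<And>x. x \<in> {-L..L} \<Longrightarrow> onorm ((*v) (V x)) \<le> Vnorm_inf V L" and "Vnorm_inf V L \<ge> 0"
proof -
  have "\<forall>i j. \<exists>B. \<forall>x\<in>{-L..L}. \<bar>V x $ i $ j\<bar> \<le> B" using pc_bounded[OF V_pc] by blast
  then obtain B where B: "\<And>i j x. x \<in> {-L..L} \<Longrightarrow> \<bar>V x $ i $ j\<bar> \<le> B i j" by metis
  have bdd: "bdd_above ((\<lambda>x. onorm (\<lambda>v. V x *v v)) ` {-L..L})"
  proof (rule bdd_aboveI2)
    fix x assume x: "x \<in> {-L..L}"
    have "onorm ((*v) (V x)) \<le> (\<Sum>i\<in>UNIV. \<Sum>j\<in>UNIV. \<bar>V x $ i $ j\<bar>)" by (rule onorm_le_matrix_component_sum)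
    also have "\<dots> \<le> (\<Sum>i\<in>UNIV. \<Sum>j\<in>UNIV. B i j)" using B[OF x] by (intro sum_mono) auto
    finally show "onorm (\<lambda>v. V x *v v) \<le> (\<Sum>i\<in>UNIV. \<Sum>j\<in>UNIV. B i j)" by simp
  qed
  show 1: "onorm ((*v) (V x)) \<le> Vnorm_inf V L" if x: "x \<in> {-L..L}" for x
  proof -
    have "onorm (\<lambda>v. V x *v v) \<le> Vnorm_inf V L"
      unfolding Vnorm_inf_def using x bdd by (intro cSup_upper) auto
    then show ?thesis by simp
  qed
  have "0 \<le> onorm ((*v) (V (-L)))" by (rule onorm_pos_le[OF matrix_vector_mul_bounded_linear])
  also have "\<dots> \<le> Vnorm_inf V L" using 1[of "-L"] L by simp
  finally show "Vnorm_inf V L \<ge> 0" .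
qed

lemma sin_lower3: "x - \<bar>x\<bar>^3 / 6 \<le> sin (x::real)"
proof -
  have "\<bar>sin x - (\<Sum>m<3. sin_coeff m * x ^ m)\<bar> \<le> inverse (fact 3) * \<bar>x\<bar> ^ 3"
    by (rule Maclaurin_sin_bound)
  moreover have "(\<Sum>m<3. sin_coeff m * x ^ m) = x"
    by (simp add: numeral_3_eq_3 lessThan_Suc sin_coeff_def)
  moreover have "inverse (fact 3 :: real) = 1/6" by (simp add: numeral_3_eq_3 fact_Suc)
  ultimately have "\<bar>sin x - x\<bar> \<le> \<bar>x\<bar>^3 / 6" by simp
  then show ?thesis using abs_ge_minus_self[of "sin x - x"] by linarith
qed

lemma cos_key:
  fixes u :: real
  assumes "0 \<le> u" "u \<le> pi/2"
  shows "u\<^sup>2 / 2 \<le> 2 - 2 * cos u" "u\<^sup>2 / 2 \<le> 2 + 2 * cos u"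
proof -
  define v where "v = u / 2"
  have v: "0 \<le> v" "v \<le> 1" using assms pi_less_4 unfolding v_def by auto
  have "sin v \<ge> v - \<bar>v\<bar>^3/6" by (rule sin_lower3)
  moreover have "\<bar>v\<bar>^3 \<le> v"
  proof -
    have "v * v \<le> 1" using v by (simp add: mult_le_one)
    then have "v * v * v \<le> 1 * v" using v by (intro mult_right_mono) auto
    then show ?thesis using v by (simp add: power3_eq_cube)
  qed
  ultimately have sv: "sin v \<ge> 5 * v / 6" by simp
  have cu: "cos u = 1 - 2 * (sin v)\<^sup>2" unfolding v_def using cos_double_sin[of "u/2"] by simp
  have "(5 * v / 6)\<^sup>2 \<le> (sin v)\<^sup>2" using sv v by (intro power_mono) auto
  then have h: "25 * (u * u) \<le> sin (u / 2) * sin (u / 2) * 144" unfolding v_def by (simp add: power2_eq_square)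
  have h0: "0 \<le> sin (u / 2) * sin (u / 2)" by simp
  have "u * u \<le> 8 * (sin (u / 2) * sin (u / 2))" using h h0 by linarith
  moreover have "cos u = 1 - 2 * (sin (u / 2) * sin (u / 2))" using cu unfolding v_def by (simp add: power2_eq_square)
  moreover have "u\<^sup>2 = u * u" by (simp add: power2_eq_square)
  ultimately show "u\<^sup>2 / 2 \<le> 2 - 2 * cos u" by linarith
  have "cos u \<ge> 0" using assms by (intro cos_ge_zero) auto
  moreover have "u\<^sup>2 \<le> 4"
  proof -
    have "u \<le> 2" using assms pi_less_4 by simp
    then have "u * u \<le> 2 * 2" using assms by (intro mult_mono) auto
    then show ?thesis by (simp add: power2_eq_square)
  qed
  ultimately show "u\<^sup>2 / 2 \<le> 2 + 2 * cos u" by simp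
qed

lemma trig_m:
  assumes "0 < \<theta>" "\<theta> < 2*pi"
  shows "(min \<theta> (2*pi - \<theta>))\<^sup>2 / 8 \<le> min (2 - 2*cos(\<theta>/2)) (2 + 2*cos(\<theta>/2))"
proof (cases "\<theta> \<le> pi")
  case True
  then have m: "min \<theta> (2*pi - \<theta>) = 2 * (\<theta>/2)" by simp
  show ?thesis unfolding m using cos_key[of "\<theta>/2"] assms True by (simp add: power2_eq_square)
next
  case False
  define u where "u = pi - \<theta>/2"
  have m: "min \<theta> (2*pi - \<theta>) = 2 * u" using False unfolding u_def by simp
  have c: "cos (\<theta>/2) = - cos u" unfolding u_def by simp
  have u: "0 \<le> u" "u \<le> pi/2" using assms False unfolding u_def by auto
  show ?thesis unfolding m c using cos_key[OF u] by (simp add: power2_eq_square)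
qed

lemma zero_sol:
  fixes y y1 :: "real \<Rightarrow> complex^'n" and V :: "real \<Rightarrow> real^'n^'n"
  assumes s: "0 < s" and sL: "s \<le> L"
    and V_pc: "\<And>i j. piecewise_continuous (\<lambda>x. V x $ i $ j)"
    and acy: "absolutely_continuous_on y {-s..s}" and acy1: "absolutely_continuous_on y1 {-s..s}"
    and N: "negligible N"
    and d0: "\<And>x. x \<in> {-s..s} - N \<Longrightarrow> (y has_vector_derivative y1 x) (at x)"
    and d1: "\<And>x. x \<in> {-s..s} - N \<Longrightarrow>
              (y1 has_vector_derivative (complex_of_real lam *s y x - complexify (V x) *v y x)) (at x)"
    and bc0: "y s = exp (\<i> * complex_of_real \<theta>) *s y (-s)"
    and bc1: "y1 s = exp (\<i> * complex_of_real \<theta>) *s y1 (-s)"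
    and cond: "lam > Vnorm_inf V L \<or> (0 \<le> lam \<and> 0 < \<theta> \<and> \<theta> < 2*pi \<and> Vnorm_inf V L < lam_inf \<and>
                 s < (1/2) * min \<theta> (2*pi - \<theta>) / sqrt (Vnorm_inf V L + lam_inf))"
  shows "\<forall>x\<in>{-s..s}. y x = 0"
proof -
  define K where "K = Vnorm_inf V L"
  have L: "L > 0" using s sL by simp
  have K0: "K \<ge> 0" unfolding K_def by (rule Vnorm_props(2)[OF V_pc L])
  have bnd: "inner (complexify (V x) *v v) v \<le> K * inner v v" if x: "x \<in> {-s..s}" for x v
  proof -
    have "x \<in> {-L..L}" using x sL by auto
    then have o: "onorm ((*v) (V x)) \<le> K" unfolding K_def by (rule Vnorm_props(1)[OF V_pc L])
    have "inner (complexify (V x) *v v) v \<le> onorm ((*v) (V x)) * inner v v" by (rule complexify_bound)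
    also have "\<dots> \<le> K * inner v v" using o by (intro mult_right_mono) auto
    finally show ?thesis .
  qed
  have cc: "cmod (exp (\<i> * complex_of_real \<theta>)) = 1" by (simp add: norm_exp_eq_Re)
  have E: "integral {-s..s} (\<lambda>x. inner (y1 x) (y1 x) + (lam - K) * inner (y x) (y x)) \<le> 0"
    by (rule energy[OF s acy acy1 N d0 d1 bnd bc0 bc1 cc])
  have cy: "continuous_on {-s..s} y" by (rule ac_continuous_on[OF acy])
  have cy1: "continuous_on {-s..s} y1" by (rule ac_continuous_on[OF acy1])
  have ss: "-s < s" using s by simp
  show ?thesis
  proof (cases "lam > K")
    case True
    show ?thesis
    proof
      fix x assume x: "x \<in> {-s..s}"
      have "inner (y1 x) (y1 x) + (lam - K) * inner (y x) (y x) = 0"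
      proof (rule cont_int_zero[OF ss _ _ E x])
        show "continuous_on {-s..s} (\<lambda>x. inner (y1 x) (y1 x) + (lam - K) * inner (y x) (y x))"
          using cy cy1 by (intro continuous_intros)
        fix z assume "z \<in> {-s..s}"
        show "0 \<le> inner (y1 z) (y1 z) + (lam - K) * inner (y z) (y z)" using True by simp
      qed
      moreover have "inner (y1 x) (y1 x) \<ge> 0" "inner (y x) (y x) \<ge> 0" by simp_all
      ultimately have "(lam - K) * inner (y x) (y x) = 0"
        using True by (smt (verit) mult_nonneg_nonneg)
      then show "y x = 0" using True by simp
    qed
  next
    case False
    then have c: "0 \<le> lam" "0 < \<theta>" "\<theta> < 2*pi" "K < lam_inf"
       "s < (1/2) * min \<theta> (2*pi - \<theta>) / sqrt (K + lam_inf)"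
      using cond unfolding K_def by auto
    define th where "th = min \<theta> (2*pi - \<theta>)"
    have th0: "th > 0" unfolding th_def using c by simp
    have pos: "K + lam_inf > 0" using K0 c by simp
    have "s * sqrt (K + lam_inf) < th / 2"
      using c(5) pos unfolding th_def by (simp add: field_simps)
    then have "(s * sqrt (K + lam_inf))\<^sup>2 < (th / 2)\<^sup>2"
      using s pos by (intro power_strict_mono) auto
    then have q: "s\<^sup>2 * (K + lam_inf) < th\<^sup>2 / 4"
      using pos by (simp add: power_mult_distrib power_divide)
    have "K * s\<^sup>2 \<le> lam_inf * s\<^sup>2" using c(4) by (intro mult_right_mono) auto
    then have "2 * K * s\<^sup>2 \<le> s\<^sup>2 * (K + lam_inf)" by (simp add: algebra_simps)
    with q have Ks: "8 * K * s\<^sup>2 < th\<^sup>2" by simp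
    define m where "m = min (2 - 2 * cos (\<theta>/2)) (2 + 2 * cos (\<theta>/2))"
    have mth: "th\<^sup>2 / 8 \<le> m" unfolding th_def m_def by (rule trig_m[OF c(2,3)])
    have mK: "m > K * s\<^sup>2" using Ks mth by simp
    have der: "(y has_vector_derivative y1 x) (at x within {-s..s})" if "x \<in> {-s..s}" for x
      using ac_C1(2)[OF acy N cy1 d0 that] by simp
    have W: "m * integral {-s..s} (\<lambda>x. (norm (y x))\<^sup>2) \<le> s\<^sup>2 * integral {-s..s} (\<lambda>x. (norm (y1 x))\<^sup>2)"
      unfolding m_def by (rule wirtinger[OF s der cy1 bc0])
    define Y where "Y = integral {-s..s} (\<lambda>x. (norm (y x))\<^sup>2)"
    define D where "D = integral {-s..s} (\<lambda>x. (norm (y1 x))\<^sup>2)"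
    have iy: "(\<lambda>x. (norm (y x))\<^sup>2) integrable_on {-s..s}" using cy by (intro integrable_continuous_real continuous_intros)
    have iy1: "(\<lambda>x. (norm (y1 x))\<^sup>2) integrable_on {-s..s}" using cy1 by (intro integrable_continuous_real continuous_intros)
    have "integral {-s..s} (\<lambda>x. inner (y1 x) (y1 x) + (lam - K) * inner (y x) (y x))
        = integral {-s..s} (\<lambda>x. (norm (y1 x))\<^sup>2 + (lam - K) * (norm (y x))\<^sup>2)"
      by (simp add: power2_norm_eq_inner)
    also have "\<dots> = D + (lam - K) * Y"
      unfolding D_def Y_def
    proof -
      have i2: "(\<lambda>x. (lam - K) * (norm (y x))\<^sup>2) integrable_on {-s..s}"
        using cy by (intro integrable_continuous_real continuous_intros)
      show "integral {-s..s} (\<lambda>x. (norm (y1 x))\<^sup>2 + (lam - K) * (norm (y x))\<^sup>2)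
          = integral {-s..s} (\<lambda>x. (norm (y1 x))\<^sup>2) + (lam - K) * integral {-s..s} (\<lambda>x. (norm (y x))\<^sup>2)"
        by (subst integral_add[OF iy1 i2]) (simp add: integral_mult_right)
    qed
    finally have E': "D + (lam - K) * Y \<le> 0" using E by simp
    have Y0: "Y \<ge> 0" unfolding Y_def by (intro integral_nonneg iy) auto
    have "m * Y \<le> s\<^sup>2 * D" using W unfolding Y_def D_def .
    also have "\<dots> \<le> s\<^sup>2 * ((K - lam) * Y)" using E' by (intro mult_left_mono) (auto simp: algebra_simps)
    also have "\<dots> \<le> s\<^sup>2 * (K * Y)" using c(1) Y0 by (intro mult_left_mono) (auto simp: algebra_simps)
    finally have "(m - K * s\<^sup>2) * Y \<le> 0" by (simp add: algebra_simps)
    then have "Y \<le> 0" using mK by (simp add: mult_le_0_iff)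
    show ?thesis
    proof
      fix x assume x: "x \<in> {-s..s}"
      have "(norm (y x))\<^sup>2 = 0"
      proof (rule cont_int_zero[OF ss _ _ _ x])
        show "continuous_on {-s..s} (\<lambda>x. (norm (y x))\<^sup>2)" using cy by (intro continuous_intros)
        show "integral {-s..s} (\<lambda>x. (norm (y x))\<^sup>2) \<le> 0" using \<open>Y \<le> 0\<close> unfolding Y_def .
      qed simp
      then show "y x = 0" by simp
    qed
  qed
qed

lemma AE_negl:
  assumes "AE x in lebesgue. P x"
  obtains N where "negligible N" "\<And>x. x \<notin> N \<Longrightarrow> P x"
proof -
  from assms obtain N where N0: "{x \<in> space lebesgue. \<not> P x} \<subseteq> N" "emeasure lebesgue N = 0" "N \<in> sets lebesgue"
    by (rule AE_E)
  then have N: "{x \<in> space lebesgue. \<not> P x} \<subseteq> N" "N \<in> null_sets lebesgue" by (auto simp: null_sets_def)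
  then have "negligible N" by (simp add: negligible_iff_null_sets)
  moreover have "\<And>x. x \<notin> N \<Longrightarrow> P x" using N(1) by auto
  ultimately show ?thesis using that by blast
qed

lemma ac_cong:
  assumes "absolutely_continuous_on f S" "\<And>x. x \<in> S \<Longrightarrow> f x = g x"
  shows "absolutely_continuous_on g S"
proof (rule acI)
  fix e :: real assume "e > 0"
  then obtain d where d: "d > 0" and H: "\<And>I::(real\<times>real) set. finite I \<Longrightarrow> (\<forall>(a,b)\<in>I. a \<le> b \<and> {a..b} \<subseteq> S) \<Longrightarrow>
        pairwise (\<lambda>(a,b) (c,d). {a<..<b} \<inter> {c<..<d} = {}) I \<Longrightarrow> (\<Sum>(a,b)\<in>I. b - a) < d
        \<Longrightarrow> (\<Sum>(a,b)\<in>I. norm (f b - f a)) < e"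
    using acD[OF assms(1)] by blast
  show "\<exists>d>0. \<forall>I::(real\<times>real) set. finite I \<longrightarrow> (\<forall>(a,b)\<in>I. a \<le> b \<and> {a..b} \<subseteq> S) \<longrightarrow>
        pairwise (\<lambda>(a,b) (c,d). {a<..<b} \<inter> {c<..<d} = {}) I \<longrightarrow> (\<Sum>(a,b)\<in>I. b - a) < d
        \<longrightarrow> (\<Sum>(a,b)\<in>I. norm (g b - g a)) < e"
  proof (intro exI[of _ d] conjI allI impI)
    fix I :: "(real\<times>real) set"
    assume A: "finite I" "\<forall>(a,b)\<in>I. a \<le> b \<and> {a..b} \<subseteq> S"
      "pairwise (\<lambda>(a,b) (c,d). {a<..<b} \<inter> {c<..<d} = {}) I" "(\<Sum>(a,b)\<in>I. b - a) < d"
    have "(\<Sum>(a,b)\<in>I. norm (g b - g a)) = (\<Sum>(a,b)\<in>I. norm (f b - f a))"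
    proof (rule sum.cong[OF refl])
      fix q assume q: "q \<in> I"
      obtain a b where ab: "q = (a,b)" by (cases q)
      have "a \<le> b \<and> {a..b} \<subseteq> S" using A(2) q unfolding ab by auto
      then have "a \<in> S" "b \<in> S" by auto
      then show "(case q of (a,b) \<Rightarrow> norm (g b - g a)) = (case q of (a,b) \<Rightarrow> norm (f b - f a))"
        unfolding ab using assms(2) by simp
    qed
    also have "\<dots> < e" using H[OF A] .
    finally show "(\<Sum>(a,b)\<in>I. norm (g b - g a)) < e" .
  qed (rule d)
qed

lemma C1_ac:
  fixes f f' :: "real \<Rightarrow> 'a::euclidean_space"
  assumes ab: "a \<le> b" and der: "\<And>x. x \<in> {a..b} \<Longrightarrow> (f has_vector_derivative f' x) (at x within {a..b})"
    and c: "continuous_on {a..b} f'"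
  shows "absolutely_continuous_on f {a..b}"
proof -
  have eq: "f a + integral {a..x} f' = f x" if x: "x \<in> {a..b}" for x
  proof -
    have "(f' has_integral f x - f a) {a..x}"
      using x by (intro fundamental_theorem_of_calculus) (auto intro: has_vector_derivative_within_subset[OF der])
    then show ?thesis by (simp add: integral_unique)
  qed
  have "absolutely_continuous_on (\<lambda>x. f a + integral {a..x} f') {a..b}"
    by (intro ac_add ac_integral c ac_lipschitz[where B=0]) simp
  then show ?thesis by (rule ac_cong) (rule eq)
qed

lemma sum_idx:
  fixes f :: "((bool \<times> 'n::finite) \<times> bool) \<Rightarrow> 'a::comm_monoid_add"
  shows "(\<Sum>k\<in>UNIV. f k) = (\<Sum>j\<in>UNIV. f ((False,j),False) + f ((False,j),True) + f ((True,j),False) + f ((True,j),True))"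
proof -
  have "(\<Sum>k\<in>UNIV. f k) = (\<Sum>k\<in>(UNIV::(bool\<times>'n) set) \<times> (UNIV::bool set). f k)"
    by (simp add: UNIV_Times_UNIV)
  also have "\<dots> = (\<Sum>q\<in>(UNIV::(bool\<times>'n) set). \<Sum>b\<in>UNIV. f (q,b))"
    by (subst sum.cartesian_product) simp
  also have "\<dots> = (\<Sum>q\<in>(UNIV::(bool\<times>'n) set). f (q,False) + f (q,True))"
    by (simp add: UNIV_bool)
  also have "\<dots> = (\<Sum>q\<in>(UNIV::bool set) \<times> (UNIV::'n set). f (q,False) + f (q,True))"
    by (simp add: UNIV_Times_UNIV)
  also have "\<dots> = (\<Sum>r\<in>(UNIV::bool set). \<Sum>j\<in>UNIV. f ((r,j),False) + f ((r,j),True))"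
    by (subst sum.cartesian_product) simp
  also have "\<dots> = (\<Sum>j\<in>UNIV. f ((False,j),False) + f ((False,j),True) + f ((True,j),False) + f ((True,j),True))"
    by (simp add: UNIV_bool sum.distrib add_ac)
  finally show ?thesis .
qed

definition Tc :: "bool \<Rightarrow> real^((bool\<times>'n::finite)\<times>bool) \<Rightarrow> complex^'n" where
  "Tc r v = (\<chi> i. Complex (v $ ((r,i),False)) (v $ ((r,i),True)))"

lemma Tc_nth: "Tc r v $ i = Complex (v $ ((r,i),False)) (v $ ((r,i),True))"
  by (simp add: Tc_def)

lemma Tc_bl: "bounded_linear (Tc r)"
proof -
  have "linear (Tc r)"
    by (rule linearI) (simp_all add: vec_eq_iff Tc_nth complex_eq_iff)
  then show ?thesis by (simp add: linear_conv_bounded_linear)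
qed

lemma if10_mult [simp]: "(if P then 1 else 0) * (x::'a::semiring_1) = (if P then x else 0)"
  "x * (if P then 1 else 0) = (if P then x else 0)"
  "x * (if P then y else 0) = (if P then x * y else 0)"
  "(if P then y else 0) * x = (if P then y * x else 0)"
  by simp_all

lemma Tc_A0: "Tc False (Amat V x lam *v p) = Tc True p"
  by (simp add: vec_eq_iff Tc_nth matrix_vector_mult_def sum_idx Amat_def Let_def)


lemma Tc_A1: "Tc True (Amat V x lam *v p) = complex_of_real lam *s Tc False p - complexify (V x) *v Tc False p"
  by (simp add: vec_eq_iff Tc_nth matrix_vector_mult_def sum_idx Amat_def Let_def kronI2_def
      complexify_def vector_scalar_mult_def complex_eq_iff Re_sum Im_sum sum_subtractf left_diff_distrib)


lemma Tc_B: "Tc r (Bmat s \<theta> *v w) = (\<i> * complex_of_real (\<theta> / (2 * s))) *s Tc r w"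
  by (cases r) (simp_all add: vec_eq_iff Tc_nth matrix_vector_mult_def sum_idx Bmat_def umat_def
      vector_scalar_mult_def complex_eq_iff sum.distrib)

lemma rot_bc:
  fixes w :: "real \<Rightarrow> real^((bool\<times>'n::finite)\<times>bool)"
  assumes s: "0 < s" "s \<le> L" and acw: "absolutely_continuous_on w {-L..L}" and N: "negligible N"
    and dw: "\<And>x. x \<in> {-L..L} - N \<Longrightarrow> (w has_vector_derivative (Bmat s \<theta> *v w x)) (at x)"
  shows "Tc r (w s) = exp (\<i> * complex_of_real \<theta>) *s Tc r (w (-s))"
proof -
  define \<phi> where "\<phi> = \<theta> / (2 * s)"
  define A where "A = - (\<i> * complex_of_real \<phi>)"
  define e where "e t = exp (t *\<^sub>R A)" for t
  have sub: "{-s..s} \<subseteq> {-L..L}" using s by auto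
  have ss: "-s \<le> s" using s by simp
  have de: "(e has_vector_derivative e t * A) (at t within S)" for t S
    unfolding e_def by (rule exp_scaleR_has_vector_derivative_right)
  have ce': "continuous_on {-s..s} (\<lambda>t. e t * A)"
    unfolding e_def by (intro continuous_intros)
  have ace: "absolutely_continuous_on e {-s..s}"
    by (rule C1_ac[OF ss de ce'])
  have comp: "Tc r (w s) $ i = exp (\<i> * complex_of_real \<theta>) * Tc r (w (-s)) $ i" for i
  proof -
    define c where "c x = Tc r (w x) $ i" for x
    have acc: "absolutely_continuous_on c {-s..s}"
      unfolding c_def
      by (intro ac_linear[OF bounded_linear_vec_nth] ac_linear[OF Tc_bl] ac_subset'[OF acw sub])
    have acd: "absolutely_continuous_on (\<lambda>x. e x * c x) {-s..s}"
      by (rule ac_bilinear[OF bounded_bilinear_mult ace acc])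
    have "(\<lambda>x. e x * c x) s - (\<lambda>x. e x * c x) (-s) = integral {-s..s} (\<lambda>x. 0)"
    proof (rule ac_ftc[OF acd ss N])
      show "continuous_on {-s..s} (\<lambda>x. 0::complex)" by simp
      fix x assume x: "x \<in> {-s..s} - N"
      then have x': "x \<in> {-L..L} - N" using sub by auto
      have "((\<lambda>x. Tc r (w x)) has_vector_derivative Tc r (Bmat s \<theta> *v w x)) (at x)"
        by (rule bounded_linear.has_vector_derivative[OF Tc_bl dw[OF x']])
      then have "((\<lambda>x. Tc r (w x) $ i) has_vector_derivative Tc r (Bmat s \<theta> *v w x) $ i) (at x)"
        by (rule bounded_linear.has_vector_derivative[OF bounded_linear_vec_nth])
      then have dc: "(c has_vector_derivative (\<i> * complex_of_real \<phi>) * c x) (at x)"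
        unfolding c_def Tc_B \<phi>_def by (simp add: vector_scalar_mult_def)
      have "((\<lambda>x. e x * c x) has_derivative (\<lambda>h. e x * (h *\<^sub>R ((\<i> * complex_of_real \<phi>) * c x)) + (h *\<^sub>R (e x * A)) * c x)) (at x)"
        using bounded_bilinear.FDERIV[OF bounded_bilinear_mult de[of x UNIV, unfolded has_vector_derivative_def]
          dc[unfolded has_vector_derivative_def]] by simp
      moreover have "(\<lambda>h. e x * (h *\<^sub>R ((\<i> * complex_of_real \<phi>) * c x)) + (h *\<^sub>R (e x * A)) * c x) = (\<lambda>h. h *\<^sub>R 0)"
        unfolding A_def by (auto simp: scaleR_conv_of_real algebra_simps)
      ultimately show "((\<lambda>x. e x * c x) has_vector_derivative 0) (at x)"
        unfolding has_vector_derivative_def by simp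
    qed
    then have eq: "e s * c s = e (-s) * c (-s)" by simp
    have e1: "exp (s *\<^sub>R (- A)) * e s = 1" unfolding e_def by (simp add: exp_minus_inverse[symmetric] exp_add[symmetric])
    have e2: "exp (s *\<^sub>R (- A)) * e (-s) = exp (\<i> * complex_of_real \<theta>)"
      unfolding e_def A_def \<phi>_def using s
      by (simp add: exp_add[symmetric] scaleR_conv_of_real field_simps)
    have "c s = exp (s *\<^sub>R (- A)) * (e s * c s)" using e1 by (simp add: mult.assoc[symmetric])
    also have "\<dots> = exp (s *\<^sub>R (- A)) * (e (-s) * c (-s))" using eq by simp
    also have "\<dots> = exp (\<i> * complex_of_real \<theta>) * c (-s)" using e2 by (simp add: mult.assoc[symmetric])
    finally show ?thesis unfolding c_def .
  qed
  show ?thesis by (simp add: vec_eq_iff comp vector_scalar_mult_def)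
qed

lemma Tc_zero:
  assumes "Tc False v = 0" "Tc True v = 0"
  shows "v = 0"
proof -
  have "v $ k = 0" for k
  proof -
    obtain r i a where k: "k = ((r,i),a)" by (metis surj_pair)
    have "Tc r v $ i = 0" using assms by (cases r) auto
    then have "v $ ((r,i),False) = 0" "v $ ((r,i),True) = 0"
      by (simp_all add: Tc_nth complex_eq_iff)
    then show ?thesis unfolding k by (cases a) auto
  qed
  then show ?thesis by (simp add: vec_eq_iff)
qed

lemma no_cross:
  fixes V :: "real \<Rightarrow> real^'n^'n"
  assumes s: "0 < s" "s \<le> L"
    and V_pc: "\<And>i j. piecewise_continuous (\<lambda>x. V x $ i $ j)"
    and pw: "(p, w) \<in> Ysol V L \<theta> s lam"
    and X: "p (-s) = w (-s)" "p s = w s"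
    and cond: "lam > Vnorm_inf V L \<or> (0 \<le> lam \<and> 0 < \<theta> \<and> \<theta> < 2*pi \<and> Vnorm_inf V L < lam_inf \<and>
                 s < (1/2) * min \<theta> (2*pi - \<theta>) / sqrt (Vnorm_inf V L + lam_inf))"
  shows "p (-s) = 0 \<and> p s = 0"
proof -
  have acp: "absolutely_continuous_on p {-L..L}" and acw: "absolutely_continuous_on w {-L..L}"
    and aep: "AE x in lebesgue. x \<in> {-L..L} \<longrightarrow> (p has_vector_derivative (Amat V x lam *v p x)) (at x)"
    and aew: "AE x in lebesgue. x \<in> {-L..L} \<longrightarrow> (w has_vector_derivative (Bmat s \<theta> *v w x)) (at x)"
    using pw unfolding Ysol_def by auto
  obtain N1 where N1: "negligible N1" "\<And>x. x \<notin> N1 \<Longrightarrow> x \<in> {-L..L} \<longrightarrow> (p has_vector_derivative (Amat V x lam *v p x)) (at x)"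
    using AE_negl[OF aep] by blast
  obtain N2 where N2: "negligible N2" "\<And>x. x \<notin> N2 \<Longrightarrow> x \<in> {-L..L} \<longrightarrow> (w has_vector_derivative (Bmat s \<theta> *v w x)) (at x)"
    using AE_negl[OF aew] by blast
  have sub: "{-s..s} \<subseteq> {-L..L}" using s by auto
  define y where "y x = Tc False (p x)" for x
  define y1 where "y1 x = Tc True (p x)" for x
  have acy: "absolutely_continuous_on y {-s..s}"
    unfolding y_def by (intro ac_linear[OF Tc_bl] ac_subset'[OF acp sub])
  have acy1: "absolutely_continuous_on y1 {-s..s}"
    unfolding y1_def by (intro ac_linear[OF Tc_bl] ac_subset'[OF acp sub])
  have dp: "(p has_vector_derivative (Amat V x lam *v p x)) (at x)" if "x \<in> {-s..s} - N1" for x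
    using N1(2)[of x] that sub by auto
  have d0: "(y has_vector_derivative y1 x) (at x)" if "x \<in> {-s..s} - N1" for x
    using bounded_linear.has_vector_derivative[OF Tc_bl dp[OF that], of False]
    unfolding y_def y1_def Tc_A0 .
  have d1: "(y1 has_vector_derivative (complex_of_real lam *s y x - complexify (V x) *v y x)) (at x)"
    if "x \<in> {-s..s} - N1" for x
    using bounded_linear.has_vector_derivative[OF Tc_bl dp[OF that], of True]
    unfolding y_def y1_def Tc_A1 .
  have dw: "(w has_vector_derivative (Bmat s \<theta> *v w x)) (at x)" if "x \<in> {-L..L} - N2" for x
    using N2(2)[of x] that by auto
  have bc0: "y s = exp (\<i> * complex_of_real \<theta>) *s y (-s)"
    unfolding y_def X by (rule rot_bc[OF s acw N2(1) dw])
  have bc1: "y1 s = exp (\<i> * complex_of_real \<theta>) *s y1 (-s)"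
    unfolding y1_def X by (rule rot_bc[OF s acw N2(1) dw])
  have z: "\<forall>x\<in>{-s..s}. y x = 0"
    by (rule zero_sol[OF s V_pc acy acy1 N1(1) d0 d1 bc0 bc1 cond])
  have cy1: "continuous_on {-s..s} y1" by (rule ac_continuous_on[OF acy1])
  have z1: "y1 x = 0" if x: "x \<in> {-s..s}" for x
  proof -
    have d: "(y has_vector_derivative y1 x) (at x within {-s..s})"
      using ac_C1(2)[OF acy N1(1) cy1 d0 x] by simp
    have d': "(y has_vector_derivative 0) (at x within {-s..s})"
    proof (rule has_vector_derivative_transform_within[where d=1])
      show "((\<lambda>x. 0) has_vector_derivative 0) (at x within {-s..s})" by simp
      fix x' assume "x' \<in> {-s..s}" then show "0 = y x'" using z by simp
    qed (use x in auto)
    show ?thesis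
      using vector_derivative_unique_within_closed_interval[of "-s" s x y "y1 x" 0] s x d d' by simp
  qed
  have "p (-s) = 0" using z z1[of "-s"] s by (intro Tc_zero) (auto simp: y_def y1_def)
  moreover have "p s = 0" using z z1[of s] s by (intro Tc_zero) (auto simp: y_def y1_def)
  ultimately show ?thesis by simp
qed

lemma no_eigen:
  fixes V :: "real \<Rightarrow> real^'n^'n"
  assumes s: "0 < s" "s \<le> L"
    and V_pc: "\<And>i j. piecewise_continuous (\<lambda>x. V x $ i $ j)"
    and cond: "lam > Vnorm_inf V L \<or> (0 \<le> lam \<and> 0 < \<theta> \<and> \<theta> < 2*pi \<and> Vnorm_inf V L < lam_inf \<and>
                 s < (1/2) * min \<theta> (2*pi - \<theta>) / sqrt (Vnorm_inf V L + lam_inf))"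
  shows "\<not> is_eigenvalue_H V \<theta> s (complex_of_real lam)"
proof
  assume "is_eigenvalue_H V \<theta> s (complex_of_real lam)"
  then obtain y :: "real \<Rightarrow> complex^'n" and y1 y2 where
    acy: "absolutely_continuous_on y {-s..s}" and acy1: "absolutely_continuous_on y1 {-s..s}"
    and a0: "AE x in lebesgue. x \<in> {-s..s} \<longrightarrow> (y has_vector_derivative y1 x) (at x)"
    and a1: "AE x in lebesgue. x \<in> {-s..s} \<longrightarrow> (y1 has_vector_derivative y2 x) (at x)"
    and bc0: "y s = exp (\<i> * complex_of_real \<theta>) *s y (-s)"
    and bc1: "y1 s = exp (\<i> * complex_of_real \<theta>) *s y1 (-s)"
    and a2: "AE x in lebesgue. x \<in> {-s..s} \<longrightarrow> y2 x + complexify (V x) *v y x = complex_of_real lam *s y x"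
    and nz: "\<exists>x\<in>{-s..s}. y x \<noteq> 0"
    unfolding is_eigenvalue_H_def by blast
  obtain N0 where N0: "negligible N0" "\<And>x. x \<notin> N0 \<Longrightarrow> x \<in> {-s..s} \<longrightarrow> (y has_vector_derivative y1 x) (at x)"
    using AE_negl[OF a0] by blast
  obtain N1 where N1: "negligible N1" "\<And>x. x \<notin> N1 \<Longrightarrow> x \<in> {-s..s} \<longrightarrow> (y1 has_vector_derivative y2 x) (at x)"
    using AE_negl[OF a1] by blast
  obtain N2 where N2: "negligible N2" "\<And>x. x \<notin> N2 \<Longrightarrow> x \<in> {-s..s} \<longrightarrow> y2 x + complexify (V x) *v y x = complex_of_real lam *s y x"
    using AE_negl[OF a2] by blast
  define N where "N = N0 \<union> N1 \<union> N2"
  have N: "negligible N" unfolding N_def using N0(1) N1(1) N2(1) by simp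
  have d0: "(y has_vector_derivative y1 x) (at x)" if "x \<in> {-s..s} - N" for x
    using N0(2)[of x] that unfolding N_def by auto
  have d1: "(y1 has_vector_derivative (complex_of_real lam *s y x - complexify (V x) *v y x)) (at x)"
    if "x \<in> {-s..s} - N" for x
  proof -
    have "(y1 has_vector_derivative y2 x) (at x)" using N1(2)[of x] that unfolding N_def by auto
    moreover have "y2 x = complex_of_real lam *s y x - complexify (V x) *v y x"
      using N2(2)[of x] that unfolding N_def by (auto simp: eq_diff_eq)
    ultimately show ?thesis by simp
  qed
  have "\<forall>x\<in>{-s..s}. y x = 0"
    by (rule zero_sol[OF s V_pc acy acy1 N d0 d1 bc0 bc1 cond])
  then show False using nz by blast
qed

lemma zero_in_Ysol: "(\<lambda>x. 0, \<lambda>x. 0) \<in> Ysol V L \<theta> s lam"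
proof -
  have ac: "absolutely_continuous_on (\<lambda>x::real. 0::real^((bool\<times>'n::finite)\<times>bool)) {-L..L}"
    by (rule ac_lipschitz[where B=0]) simp
  show ?thesis unfolding Ysol_def
    using ac by (auto intro!: AE_I2)
qed

lemma Xset_mem: "(u, v) \<in> Xset \<longleftrightarrow> u = v"
  by (simp add: Xset_def)

lemma not_crossing:
  fixes V :: "real \<Rightarrow> real^'n^'n"
  assumes H: "\<And>p w. (p, w) \<in> Ysol V L \<theta> s lam \<Longrightarrow> p (-s) = w (-s) \<Longrightarrow> p s = w s \<Longrightarrow> p (-s) = 0 \<and> p s = 0"
  shows "\<not> is_crossing V L \<theta> s lam"
proof -
  have "(Phi s ` Ysol V L \<theta> s lam) \<inter> (Xset \<times> Xset) = {0}"
  proof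
    show "(Phi s ` Ysol V L \<theta> s lam) \<inter> (Xset \<times> Xset) \<subseteq> {0}"
    proof
      fix q assume q: "q \<in> (Phi s ` Ysol V L \<theta> s lam) \<inter> (Xset \<times> Xset)"
      then obtain pw where pw: "pw \<in> Ysol V L \<theta> s lam" "q = Phi s pw" by blast
      obtain p w where pw': "pw = (p, w)" by (cases pw)
      have q': "q = ((p (-s), w (-s)), (p s, w s))" using pw(2) unfolding pw' Phi_def by simp
      have "q \<in> Xset \<times> Xset" using q by blast
      then have X: "p (-s) = w (-s)" "p s = w s" unfolding q' by (simp_all add: Xset_mem)
      have Z: "p (-s) = 0 \<and> p s = 0" using H[OF pw(1)[unfolded pw'] X] .
      show "q \<in> {0}" unfolding q' using Z X by (simp add: zero_prod_def)
    qed
    have e0: "Phi s (\<lambda>x. 0, \<lambda>x. 0) = 0" by (simp add: Phi_def zero_prod_def)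
    have "0 \<in> Phi s ` Ysol V L \<theta> s lam"
      by (rule image_eqI[where x="(\<lambda>x. 0, \<lambda>x. 0)"]) (simp_all add: e0 zero_in_Ysol)
    moreover have "(0 :: ((real^((bool\<times>'n)\<times>bool)) \<times> (real^((bool\<times>'n)\<times>bool))) \<times> ((real^((bool\<times>'n)\<times>bool)) \<times> (real^((bool\<times>'n)\<times>bool)))) \<in> Xset \<times> Xset"
      by (simp add: zero_prod_def Xset_mem)
    ultimately show "{0} \<subseteq> (Phi s ` Ysol V L \<theta> s lam) \<inter> (Xset \<times> Xset)" by blast
  qed
  then show ?thesis unfolding is_crossing_def by simp
qed

theorem lemma3p12:
  fixes V :: "real \<Rightarrow> real^'n^'n" and L :: real
  assumes L_pos: "L > 0"
    and V_sym: "\<And>x. transpose (V x) = V x"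
    and V_per: "\<And>x. V (x + 2 * L) = V x"
    and V_pc: "\<And>i j. piecewise_continuous (\<lambda>x. V x $ i $ j)"
  shows
    "(\<forall>\<theta> lam_inf. \<theta> \<in> {0..2*pi} \<and> lam_inf > Vnorm_inf V L \<longrightarrow>
        (\<forall>s\<in>{0<..L}. \<not> is_eigenvalue_H V \<theta> s (complex_of_real lam_inf)) \<and>
        (\<forall>s0\<in>{0<..<L}. \<forall>s\<in>{s0..L}. \<not> is_crossing V L \<theta> s lam_inf))
     \<and>
     (\<forall>\<theta> lam_inf s0. \<theta> \<in> {0<..<2*pi} \<and> lam_inf > Vnorm_inf V L \<and> s0 \<in> {0<..<L} \<and>
        s0 < (1/2) * min \<theta> (2*pi - \<theta>) / sqrt (Vnorm_inf V L + lam_inf) \<longrightarrow>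
        (\<forall>lam\<in>{0..lam_inf}. \<not> is_eigenvalue_H V \<theta> s0 (complex_of_real lam)) \<and>
        (\<forall>lam\<in>{0..lam_inf}. \<not> is_crossing V L \<theta> s0 lam))"
proof (intro conjI allI impI ballI)
  fix \<theta> lam_inf s
  assume A: "\<theta> \<in> {0..2*pi} \<and> lam_inf > Vnorm_inf V L" and s: "s \<in> {0<..L}"
  show "\<not> is_eigenvalue_H V \<theta> s (complex_of_real lam_inf)"
    using A s by (intro no_eigen[OF _ _ V_pc]) auto
next
  fix \<theta> lam_inf s0 s
  assume A: "\<theta> \<in> {0..2*pi} \<and> lam_inf > Vnorm_inf V L" and s0: "s0 \<in> {0<..<L}" and s: "s \<in> {s0..L}"
  have s': "0 < s" "s \<le> L" using s0 s by auto
  show "\<not> is_crossing V L \<theta> s lam_inf"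
  proof (rule not_crossing)
    fix p w assume "(p, w) \<in> Ysol V L \<theta> s lam_inf" "p (-s) = w (-s)" "p s = w s"
    then show "p (-s) = 0 \<and> p s = 0"
      using A by (intro no_cross[OF s' V_pc, where lam_inf=lam_inf]) auto
  qed
next
  fix \<theta> lam_inf s0 lam
  assume A: "\<theta> \<in> {0<..<2*pi} \<and> lam_inf > Vnorm_inf V L \<and> s0 \<in> {0<..<L} \<and>
        s0 < (1/2) * min \<theta> (2*pi - \<theta>) / sqrt (Vnorm_inf V L + lam_inf)" and lam: "lam \<in> {0..lam_inf}"
  have s': "0 < s0" "s0 \<le> L" using A by auto
  show "\<not> is_eigenvalue_H V \<theta> s0 (complex_of_real lam)"
    using A lam by (intro no_eigen[OF s' V_pc, where lam_inf=lam_inf]) auto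
next
  fix \<theta> lam_inf s0 lam
  assume A: "\<theta> \<in> {0<..<2*pi} \<and> lam_inf > Vnorm_inf V L \<and> s0 \<in> {0<..<L} \<and>
        s0 < (1/2) * min \<theta> (2*pi - \<theta>) / sqrt (Vnorm_inf V L + lam_inf)" and lam: "lam \<in> {0..lam_inf}"
  have s': "0 < s0" "s0 \<le> L" using A by auto
  show "\<not> is_crossing V L \<theta> s0 lam"
  proof (rule not_crossing)
    fix p w assume "(p, w) \<in> Ysol V L \<theta> s0 lam" "p (-s0) = w (-s0)" "p s0 = w s0"
    then show "p (-s0) = 0 \<and> p s0 = 0"
      using A lam by (intro no_cross[OF s' V_pc, where lam_inf=lam_inf]) auto
  qed
qed

end
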